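(* Let $\beta,\rho>0$ and $y\in\mathbb{R}^n$. Define $\Sigma=\mathrm{Diag}(\sigma)\in\mathbb{R}^{(n-1)\times(n-1)}$ by $\sigma_i=1$ if $i\in\mathcal I_{\mathcal D}(P_yy-\rho w)$ and $\sigma_i=0$ otherwise, and $\Theta=\mathrm{Diag}(\theta)\in\mathbb{R}^{n\times n}$ by $\theta_i=0$ if $|(S_\rho(y))_i|\le\beta$ and $\theta_i=1$ otherwise. Then \[ M:=\Theta P_y^T\big(I_n-B^T(\Sigma BB^T\Sigma)^{\dagger}B\big)P_y \;\in\;\mathcal M(y). \]
   Context: $S_\rho(y):=\operatorname{argmin}_x\{\tfrac12\|x-y\|^2+\rho\sum_{i<j}|x_i-x_j|\}$. $w_k=n-2k+1$. $\mathcal D:=\{x: x_1\ge\cdots\ge x_n\}$, $\Pi_{\mathcal D}$ the Euclidean projection. $B\in\mathbb{R}^{(n-1)\times n}$ with $Bx=(x_1-x_2,\dots,x_{n-1}-x_n)^T$, $B_i$ its $i$-th row, $B_K$ rows indexed by $K$; $C^\dagger$ is the Moore–Penrose inverse. For each $y$, $P_y$ is a fixed permutation matrix with $P_yy$ non-increasing. For $v\in\mathbb{R}^n$: $\mathcal M_{\mathcal D}(v)$ is the set of $\lambda\in\mathbb{R}^{n-1}$ with $\Pi_{\mathcal D}(v)-v+B^T\lambda=0$, $B\Pi_{\mathcal D}(v)\ge0$, $\lambda\le0$, $\lambda^TB\Pi_{\mathcal D}(v)=0$; $\mathcal I_{\mathcal D}(v):=\{i\in\{1,\dots,n-1\}: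 B_i\Pi_{\mathcal D}(v)=0\}$; $\mathcal K_{\mathcal D}(v):=\{K:\exists\lambda\in\mathcal M_{\mathcal D}(v),\ \mathrm{supp}(\lambda)\subseteq K\subseteq\mathcal I_{\mathcal D}(v),\ B_K\text{ full row rank}\}$; $\mathcal Q_{\mathcal D}(v):=\{I_n-B_K^T(B_KB_K^T)^{-1}B_K:K\in\mathcal K_{\mathcal D}(v)\}$; $\mathcal Q_{S_\rho}(y):=\{P_y^T\widehat QP_y:\widehat Q\in\mathcal Q_{\mathcal D}(P_yy-\rho w)\}$. $\partial_B\mathrm{Prox}_{\beta\|\cdot\|_1}(\eta)$ is the set of $\mathrm{Diag}(q)$ with $q_i=0$ if $|\eta_i|<\beta$, $q_i\in\{0,1\}$ if $|\eta_i|=\beta$, $q_i=1$ otherwise. $\mathcal M(y):=\{M\text{ symmetric}: M=\Theta Q,\ \Theta\in\partial_B\mathrm{Prox}_{\beta\|\cdot\|_1}(S_\rho(y)),\ Q\in\mathcal Q_{S_\rho}(y)\}$. *)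

theory Defs
  imports "Jordan_Normal_Form.DL_Submatrix" "HOL-Combinatorics.Permutations"
begin

(* Vectors of R^n are JNF vectors of dimension n, matrices are JNF matrices;
   indices are 0-based: component i here is component i+1 in the paper. *)

definition sqnorm :: "real vec \<Rightarrow> real" where
  "sqnorm v = (\<Sum>i<dim_vec v. (v $ i)^2)"

definition slope_obj :: "nat \<Rightarrow> real \<Rightarrow> real vec \<Rightarrow> real vec \<Rightarrow> real" where
  "slope_obj n \<rho> y x = sqnorm (x - y) / 2 + \<rho> * (\<Sum>i<n. \<Sum>j\<in>{i<..<n}. \<bar>x $ i - x $ j\<bar>)"

definition S_prox :: "nat \<Rightarrow> real \<Rightarrow> real vec \<Rightarrow> real vec" where
  "S_prox n \<rho> y = (THE x. x \<in> carrier_vec n \<and>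
      (\<forall>z\<in>carrier_vec n. slope_obj n \<rho> y x \<le> slope_obj n \<rho> y z))"

(* w_k = n - 2k + 1 for k = 1..n, i.e. w $ i = n - 2(i+1) + 1 *)
definition wvec :: "nat \<Rightarrow> real vec" where
  "wvec n = vec n (\<lambda>i. real n - 2 * real (i + 1) + 1)"

definition Dcone :: "nat \<Rightarrow> real vec set" where
  "Dcone n = {x \<in> carrier_vec n. \<forall>i. i + 1 < n \<longrightarrow> x $ i \<ge> x $ (i + 1)}"

definition projD :: "nat \<Rightarrow> real vec \<Rightarrow> real vec" where
  "projD n v = (THE x. x \<in> Dcone n \<and> (\<forall>z\<in>Dcone n. sqnorm (x - v) \<le> sqnorm (z - v)))"

definition Bmat :: "nat \<Rightarrow> real mat" where
  "Bmat n = mat (n - 1) n (\<lambda>(i, j). if j = i then 1 else if j = i + 1 then -1 else 0)"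

definition Brows :: "nat \<Rightarrow> nat set \<Rightarrow> real mat" where
  "Brows n K = submatrix (Bmat n) K {..<n}"

definition full_row_rank :: "real mat \<Rightarrow> bool" where
  "full_row_rank A \<longleftrightarrow> (\<forall>c \<in> carrier_vec (dim_row A). transpose_mat A *\<^sub>v c = 0\<^sub>v (dim_col A) \<longrightarrow> c = 0\<^sub>v (dim_row A))"

definition mat_inv :: "real mat \<Rightarrow> real mat" where
  "mat_inv A = (THE X. X \<in> carrier_mat (dim_row A) (dim_row A) \<and>
       A * X = 1\<^sub>m (dim_row A) \<and> X * A = 1\<^sub>m (dim_row A))"

definition pinv :: "real mat \<Rightarrow> real mat" where
  "pinv A = (THE X. X \<in> carrier_mat (dim_col A) (dim_row A) \<and>
       A * X * A = A \<and> X * A * X = X \<and>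
       transpose_mat (A * X) = A * X \<and> transpose_mat (X * A) = X * A)"

definition diag_of :: "nat \<Rightarrow> (nat \<Rightarrow> real) \<Rightarrow> real mat" where
  "diag_of n d = mat n n (\<lambda>(i, j). if i = j then d i else 0)"

(* permutation matrix: (P x) $ i = x $ (\<pi> i) *)
definition perm_mat :: "nat \<Rightarrow> (nat \<Rightarrow> nat) \<Rightarrow> real mat" where
  "perm_mat n \<pi> = mat n n (\<lambda>(i, j). if \<pi> i = j then 1 else 0)"

definition is_perm_mat :: "nat \<Rightarrow> real mat \<Rightarrow> bool" where
  "is_perm_mat n P \<longleftrightarrow> (\<exists>\<pi>. \<pi> permutes {..<n} \<and> P = perm_mat n \<pi>)"

definition nonincreasing_vec :: "real vec \<Rightarrow> bool" where
  "nonincreasing_vec x \<longleftrightarrow> (\<forall>i j. i \<le> j \<longrightarrow> j < dim_vec x \<longrightarrow> x $ j \<le> x $ i)"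

definition MD :: "nat \<Rightarrow> real vec \<Rightarrow> real vec set" where
  "MD n v = {lam \<in> carrier_vec (n - 1).
      projD n v - v + transpose_mat (Bmat n) *\<^sub>v lam = 0\<^sub>v n \<and>
      (\<forall>i < n - 1. (Bmat n *\<^sub>v projD n v) $ i \<ge> 0) \<and>
      (\<forall>i < n - 1. lam $ i \<le> 0) \<and>
      lam \<bullet> (Bmat n *\<^sub>v projD n v) = 0}"

definition ID :: "nat \<Rightarrow> real vec \<Rightarrow> nat set" where
  "ID n v = {i. i < n - 1 \<and> (Bmat n *\<^sub>v projD n v) $ i = 0}"

definition KD :: "nat \<Rightarrow> real vec \<Rightarrow> nat set set" where
  "KD n v = {K. \<exists>lam \<in> MD n v. {i. i < n - 1 \<and> lam $ i \<noteq> 0} \<subseteq> K \<and> K \<subseteq> ID n v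
       \<and> full_row_rank (Brows n K)}"

definition QD :: "nat \<Rightarrow> real vec \<Rightarrow> real mat set" where
  "QD n v = (\<lambda>K. 1\<^sub>m n - transpose_mat (Brows n K) *
       mat_inv (Brows n K * transpose_mat (Brows n K)) * Brows n K) ` KD n v"

definition QS :: "nat \<Rightarrow> real \<Rightarrow> real mat \<Rightarrow> real vec \<Rightarrow> real mat set" where
  "QS n \<rho> P y = (\<lambda>Q. transpose_mat P * Q * P) ` QD n (P *\<^sub>v y - \<rho> \<cdot>\<^sub>v wvec n)"

(* B-subdifferential of Prox_{beta ||.||_1} at eta *)
definition dB_prox_l1 :: "nat \<Rightarrow> real \<Rightarrow> real vec \<Rightarrow> real mat set" where
  "dB_prox_l1 n \<beta> \<eta> = {diag_of n q | q.
      \<forall>i < n. (\<bar>\<eta> $ i\<bar> < \<beta> \<longrightarrow> q i = 0) \<and> (\<bar>\<eta> $ i\<bar> = \<beta> \<longrightarrow> q i \<in> {0, 1})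
             \<and> (\<bar>\<eta> $ i\<bar> > \<beta> \<longrightarrow> q i = 1)}"

definition Mset :: "nat \<Rightarrow> real \<Rightarrow> real \<Rightarrow> real mat \<Rightarrow> real vec \<Rightarrow> real mat set" where
  "Mset n \<beta> \<rho> P y = {M. M = transpose_mat M \<and>
      (\<exists>\<Theta> \<in> dB_prox_l1 n \<beta> (S_prox n \<rho> y). \<exists>Q \<in> QS n \<rho> P y. M = \<Theta> * Q)}"

end

theory Submission imports Defs "Jordan_Normal_Form.Determinant" "HOL-Analysis.Function_Topology" begin

lemma exists_min_box:
  fixes f :: "(nat \<Rightarrow> real) \<Rightarrow> real"
  assumes cont: "continuous_map (product_topology (\<lambda>_. euclideanreal) {..<n}) euclideanreal f"
    and a: "a \<in> extensional {..<n}"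
    and coer: "\<And>z. z \<in> extensional {..<n} \<Longrightarrow> f z \<le> f a \<Longrightarrow> (\<forall>i<n. \<bar>z i\<bar> \<le> r)"
  shows "\<exists>x\<in>extensional {..<n}. \<forall>z\<in>extensional {..<n}. f x \<le> f z"
proof -
  let ?X = "product_topology (\<lambda>_. euclideanreal) {..<n}"
  let ?C = "PiE {..<n} (\<lambda>_. {-r..r})"
  have aC: "a \<in> ?C" using coer[OF a order_refl] a by (auto simp: PiE_def Pi_def abs_le_iff)
  have "compactin ?X ?C" by (subst compactin_PiE) auto
  then have "compactin euclideanreal (f ` ?C)" by (rule image_compactin[OF _ cont])
  then have cp: "compact (f ` ?C)" by simp
  have ne: "f ` ?C \<noteq> {}" using aC by auto
  obtain m where m: "m \<in> f ` ?C" "\<forall>t\<in>f ` ?C. m \<le> t" using compact_attains_inf[OF cp ne] by blast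
  then obtain x where x: "x \<in> ?C" "m = f x" by auto
  show ?thesis
  proof (intro bexI ballI)
    show "x \<in> extensional {..<n}" using x by (auto simp: PiE_def)
    fix z :: "nat \<Rightarrow> real" assume z: "z \<in> extensional {..<n}"
    show "f x \<le> f z"
    proof (cases "f z \<le> f a")
      case True
      then have "z \<in> ?C" using coer[OF z] z by (auto simp: PiE_def Pi_def abs_le_iff)
      then show ?thesis using m x by auto
    next
      case False
      then show ?thesis using m x aC by force
    qed
  qed
qed

lemma Bmat_carrier[simp]: "Bmat n \<in> carrier_mat (n-1) n"
  by (simp add: Bmat_def)

lemma Bmat_index: "i < n-1 \<Longrightarrow> j < n \<Longrightarrow> Bmat n $$ (i,j) = (if j = i then 1 else if j = i+1 then -1 else 0)"
  by (simp add: Bmat_def)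

lemma Bmat_mult: assumes "x \<in> carrier_vec n" "i < n-1"
  shows "(Bmat n *\<^sub>v x) $ i = x$i - x$(i+1)"
proof -
  have "(Bmat n *\<^sub>v x) $ i = (\<Sum>j<n. Bmat n $$ (i,j) * x$j)"
    using assms by (simp add: mult_mat_vec_def scalar_prod_def Bmat_def lessThan_atLeast0)
  also have "\<dots> = (\<Sum>j<n. (if j = i then x$j else 0) + (if j = i+1 then - x$j else 0))"
    using assms by (intro sum.cong) (auto simp: Bmat_index)
  also have "\<dots> = x$i - x$(i+1)" using assms by (auto simp: sum.distrib)
  finally show ?thesis .
qed

lemma BT_mult: assumes "c \<in> carrier_vec (n-1)" "j < n"
  shows "(transpose_mat (Bmat n) *\<^sub>v c) $ j = (if j < n-1 then c$j else 0) - (if 0 < j then c$(j-1) else 0)"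
proof -
  have "(transpose_mat (Bmat n) *\<^sub>v c) $ j = (\<Sum>i<n-1. Bmat n $$ (i,j) * c$i)"
    using assms by (simp add: mult_mat_vec_def scalar_prod_def Bmat_def lessThan_atLeast0)
  also have "\<dots> = (\<Sum>i<n-1. (if i = j then c$i else 0) - (if i = j - 1 \<and> 0 < j then c$i else 0))"
    using assms by (intro sum.cong) (auto simp: Bmat_index)
  also have "\<dots> = (if j < n-1 then c$j else 0) - (if 0 < j then c$(j-1) else 0)"
    using assms by (auto simp: sum_subtractf)
  finally show ?thesis .
qed

lemma empty_n: "{n<..<Suc n} = {}" by auto

lemma double_sum_sym:
  fixes f :: "nat \<Rightarrow> nat \<Rightarrow> real"
  assumes "\<And>i j. f i j = f j i" "\<And>i. f i i = 0"
  shows "(\<Sum>i<n. \<Sum>j<n. f i j) = 2 * (\<Sum>i<n. \<Sum>j\<in>{i<..<n}. f i j)"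
proof (induction n)
  case 0 then show ?case by simp
next
  case (Suc n)
  have A: "(\<Sum>i<Suc n. \<Sum>j<Suc n. f i j) = (\<Sum>i<n. \<Sum>j<n. f i j) + 2 * (\<Sum>i<n. f i n)"
  proof -
    have "(\<Sum>i<Suc n. \<Sum>j<Suc n. f i j) = (\<Sum>i<n. \<Sum>j<n. f i j) + (\<Sum>i<n. f i n) + (\<Sum>j<n. f n j) + f n n"
      by (simp add: sum.distrib)
    moreover have "(\<Sum>j<n. f n j) = (\<Sum>i<n. f i n)" using assms(1) by metis
    ultimately show ?thesis using assms(2) by simp
  qed
  have "(\<Sum>i<Suc n. \<Sum>j\<in>{i<..<Suc n}. f i j) = (\<Sum>i<n. \<Sum>j\<in>{i<..<Suc n}. f i j)"
    using empty_n by simp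
  also have "\<dots> = (\<Sum>i<n. (\<Sum>j\<in>{i<..<n}. f i j) + f i n)"
  proof (intro sum.cong refl)
    fix i assume "i \<in> {..<n}"
    then have "{i<..<Suc n} = insert n {i<..<n}" by auto
    then show "(\<Sum>j\<in>{i<..<Suc n}. f i j) = (\<Sum>j\<in>{i<..<n}. f i j) + f i n" by simp
  qed
  finally show ?case using A Suc.IH by (simp add: sum.distrib algebra_simps)
qed

lemma linear_pair_sum:
  fixes a :: "nat \<Rightarrow> real"
  shows "(\<Sum>i<n. \<Sum>j\<in>{i<..<n}. a i - a j) = (\<Sum>i<n. (real n - 2 * real (i + 1) + 1) * a i)"
proof (induction n)
  case 0 then show ?case by simp
next
  case (Suc n)
  have "(\<Sum>i<Suc n. \<Sum>j\<in>{i<..<Suc n}. a i - a j) = (\<Sum>i<n. (\<Sum>j\<in>{i<..<n}. a i - a j) + (a i - a n))"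
  proof -
    have "(\<Sum>i<Suc n. \<Sum>j\<in>{i<..<Suc n}. a i - a j) = (\<Sum>i<n. \<Sum>j\<in>{i<..<Suc n}. a i - a j)" using empty_n by simp
    also have "\<dots> = (\<Sum>i<n. (\<Sum>j\<in>{i<..<n}. a i - a j) + (a i - a n))"
    proof (intro sum.cong refl)
      fix i assume "i \<in> {..<n}"
      then have "{i<..<Suc n} = insert n {i<..<n}" by auto
      then show "(\<Sum>j\<in>{i<..<Suc n}. a i - a j) = (\<Sum>j\<in>{i<..<n}. a i - a j) + (a i - a n)" by simp
    qed
    finally show ?thesis .
  qed
  also have "\<dots> = (\<Sum>i<n. (real n - 2 * real (i + 1) + 1) * a i) + (\<Sum>i<n. a i) - real n * a n"
    using Suc.IH by (simp add: sum.distrib sum_subtractf)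
  also have "\<dots> = (\<Sum>i<Suc n. (real (Suc n) - 2 * real (i + 1) + 1) * a i)"
  proof -
    have "(\<Sum>i<Suc n. (real (Suc n) - 2 * real (i + 1) + 1) * a i) = (\<Sum>i<n. (real n - 2 * real (i + 1) + 1) * a i + a i) - real n * a n"
      by (simp add: algebra_simps)
    then show ?thesis by (simp add: sum.distrib)
  qed
  finally show ?case .
qed

lemma perm_mat_carrier[simp]: "perm_mat n \<pi> \<in> carrier_mat n n"
  by (simp add: perm_mat_def)

lemma perm_mult_vec:
  assumes p: "\<pi> permutes {..<n}" and z: "z \<in> carrier_vec n" and i: "i < n"
  shows "(perm_mat n \<pi> *\<^sub>v z) $ i = z $ (\<pi> i)"
proof -
  have pi: "\<pi> i < n" using p i by (meson lessThan_iff permutes_in_image)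
  have "(perm_mat n \<pi> *\<^sub>v z) $ i = (\<Sum>j<n. (if \<pi> i = j then 1 else 0) * z$j)"
    using z i by (simp add: mult_mat_vec_def scalar_prod_def perm_mat_def lessThan_atLeast0)
  also have "\<dots> = (\<Sum>j<n. (if j = \<pi> i then z$j else 0))"
    by (intro sum.cong refl) auto
  also have "\<dots> = z $ (\<pi> i)" using pi by simp
  finally show ?thesis .
qed

lemma permT_mult_vec:
  assumes p: "\<pi> permutes {..<n}" and z: "z \<in> carrier_vec n" and i: "i < n"
  shows "(transpose_mat (perm_mat n \<pi>) *\<^sub>v z) $ i = z $ (inv_into UNIV \<pi> i)"
proof -
  have pi: "inv_into UNIV \<pi> i < n" using p i by (meson lessThan_iff permutes_in_image permutes_inv)
  have "(transpose_mat (perm_mat n \<pi>) *\<^sub>v z) $ i = (\<Sum>j<n. (if \<pi> j = i then 1 else 0) * z$j)"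
    using z i by (simp add: mult_mat_vec_def scalar_prod_def perm_mat_def lessThan_atLeast0)
  also have "\<dots> = (\<Sum>j<n. (if j = inv_into UNIV \<pi> i then z$j else 0))"
    using p by (intro sum.cong refl) (auto simp: permutes_inverses(1) permutes_inverses(2))
  also have "\<dots> = z $ (inv_into UNIV \<pi> i)" using pi by simp
  finally show ?thesis .
qed

definition Fsum :: "nat \<Rightarrow> real vec \<Rightarrow> real" where
  "Fsum n x = (\<Sum>i<n. \<Sum>j\<in>{i<..<n}. \<bar>x $ i - x $ j\<bar>)"

lemma sqnorm_diff: "x \<in> carrier_vec n \<Longrightarrow> y \<in> carrier_vec n \<Longrightarrow> sqnorm (x - y) = (\<Sum>i<n. (x$i - y$i)^2)"
  by (simp add: sqnorm_def)

lemma slope_obj_alt: "x \<in> carrier_vec n \<Longrightarrow> y \<in> carrier_vec n \<Longrightarrow>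
   slope_obj n \<rho> y x = (\<Sum>i<n. (x$i - y$i)^2) / 2 + \<rho> * Fsum n x"
  by (simp add: slope_obj_def sqnorm_diff Fsum_def)

lemma Fsum_nonneg: "Fsum n x \<ge> 0"
  unfolding Fsum_def by (intro sum_nonneg) auto

lemma Fsum_double: "Fsum n x = (\<Sum>i<n. \<Sum>j<n. \<bar>x $ i - x $ j\<bar>) / 2"
  unfolding Fsum_def by (subst double_sum_sym) auto

lemma Fsum_perm:
  assumes p: "\<sigma> permutes {..<n}"
  shows "Fsum n (vec n (\<lambda>i. x $ (\<sigma> i))) = Fsum n x"
proof -
  have "(\<Sum>i<n. \<Sum>j<n. \<bar>vec n (\<lambda>i. x $ (\<sigma> i)) $ i - vec n (\<lambda>i. x $ (\<sigma> i)) $ j\<bar>)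
      = (\<Sum>i<n. \<Sum>j<n. \<bar>x $ (\<sigma> i) - x $ (\<sigma> j)\<bar>)" by simp
  also have "\<dots> = (\<Sum>i<n. \<Sum>j<n. \<bar>x $ (\<sigma> i) - x $ j\<bar>)"
  proof (rule sum.cong[OF refl])
    fix i assume "i \<in> {..<n}"
    show "(\<Sum>j<n. \<bar>x $ (\<sigma> i) - x $ (\<sigma> j)\<bar>) = (\<Sum>j<n. \<bar>x $ (\<sigma> i) - x $ j\<bar>)"
      using sum.permute[OF p, of "\<lambda>j. \<bar>x $ (\<sigma> i) - x $ j\<bar>"] by (simp add: comp_def)
  qed
  also have "\<dots> = (\<Sum>i<n. \<Sum>j<n. \<bar>x $ i - x $ j\<bar>)"
    by (rule sum.permute[OF p, symmetric, unfolded comp_def, where g = "\<lambda>i. \<Sum>j<n. \<bar>x $ i - x $ j\<bar>"])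
  finally show ?thesis unfolding Fsum_double by simp
qed

lemma slope_perm:
  assumes p: "\<sigma> permutes {..<n}" and x: "x \<in> carrier_vec n" and y: "y \<in> carrier_vec n"
  shows "slope_obj n \<rho> (vec n (\<lambda>i. y $ (\<sigma> i))) (vec n (\<lambda>i. x $ (\<sigma> i))) = slope_obj n \<rho> y x"
proof -
  have "(\<Sum>i<n. (x $ (\<sigma> i) - y $ (\<sigma> i))^2) = (\<Sum>i<n. (x$i - y$i)^2)"
    by (rule sum.permute[OF p, symmetric, unfolded comp_def, where g = "\<lambda>i. (x$i - y$i)^2"])
  then show ?thesis using x y by (simp add: slope_obj_alt Fsum_perm[OF p])
qed

lemma slope_unique:
  assumes r: "\<rho> \<ge> 0" and y: "y \<in> carrier_vec n" and a: "a \<in> carrier_vec n" and b: "b \<in> carrier_vec n"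
    and am: "\<forall>z\<in>carrier_vec n. slope_obj n \<rho> y a \<le> slope_obj n \<rho> y z"
    and bm: "\<forall>z\<in>carrier_vec n. slope_obj n \<rho> y b \<le> slope_obj n \<rho> y z"
  shows "a = b"
proof -
  define m where "m = vec n (\<lambda>i. (a$i + b$i)/2)"
  have mc: "m \<in> carrier_vec n" by (simp add: m_def)
  have sq: "4 * (\<Sum>i<n. (m$i - y$i)^2) = 2 * (\<Sum>i<n. (a$i - y$i)^2) + 2 * (\<Sum>i<n. (b$i - y$i)^2) - (\<Sum>i<n. (a$i - b$i)^2)"
  proof -
    have "(\<Sum>i<n. 4 * (m$i - y$i)^2) = (\<Sum>i<n. 2 * (a$i - y$i)^2 + 2 * (b$i - y$i)^2 - (a$i - b$i)^2)"
      by (intro sum.cong refl) (simp add: m_def power2_eq_square field_simps)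
    then show ?thesis by (simp add: sum_subtractf sum_distrib_left sum.distrib)
  qed
  have F: "Fsum n m \<le> (Fsum n a + Fsum n b)/2"
  proof -
    have "Fsum n m \<le> (\<Sum>i<n. \<Sum>j\<in>{i<..<n}. (\<bar>a $ i - a $ j\<bar> + \<bar>b $ i - b $ j\<bar>)/2)"
      unfolding Fsum_def
    proof (intro sum_mono)
      fix i j assume "i \<in> {..<n}" "j \<in> {i<..<n}"
      then have "i < n" "j < n" by auto
      then show "\<bar>m $ i - m $ j\<bar> \<le> (\<bar>a $ i - a $ j\<bar> + \<bar>b $ i - b $ j\<bar>)/2"
      proof -
        have e: "m $ i - m $ j = ((a$i - a$j) + (b$i - b$j))/2" using \<open>i<n\<close> \<open>j<n\<close> by (simp add: m_def field_simps)
        have "\<bar>m $ i - m $ j\<bar> = \<bar>((a$i - a$j) + (b$i - b$j))/2\<bar>" by (subst e) (rule refl)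
        also have "\<dots> = \<bar>(a$i - a$j) + (b$i - b$j)\<bar> / 2" by (simp add: abs_divide)
        finally have "\<bar>m $ i - m $ j\<bar> = \<bar>(a$i - a$j) + (b$i - b$j)\<bar> / 2" .
        then show ?thesis using abs_triangle_ineq[of "a$i - a$j" "b$i - b$j"] by (metis divide_right_mono zero_le_numeral)
      qed
    qed
    also have "\<dots> = (Fsum n a + Fsum n b)/2"
      by (simp add: Fsum_def sum.distrib add_divide_distrib flip: sum_divide_distrib)
    finally show ?thesis .
  qed
  have ga: "slope_obj n \<rho> y a \<le> slope_obj n \<rho> y b" using bm a am b by auto
  have gb: "slope_obj n \<rho> y b \<le> slope_obj n \<rho> y a" using bm a am b by auto
  have gm: "slope_obj n \<rho> y a \<le> slope_obj n \<rho> y m" using am mc by auto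
  have "\<rho> * Fsum n m \<le> \<rho> * ((Fsum n a + Fsum n b)/2)" using F r by (rule mult_left_mono)
  then have "(\<Sum>i<n. (a$i - b$i)^2) \<le> 0"
    using ga gb gm sq a b y mc by (simp add: slope_obj_alt field_simps)
  then have z: "\<forall>i\<in>{..<n}. (a$i - b$i)^2 = 0"
    using sum_nonneg_eq_0_iff[of "{..<n}" "\<lambda>i. (a$i - b$i)^2"]
    by (simp add: order_antisym sum_nonneg)
  show ?thesis using a b z by (intro eq_vecI) auto
qed

lemma abs_le_1_sq: "\<bar>t::real\<bar> \<le> 1 + t^2"
proof (cases "\<bar>t\<bar> \<le> 1")
  case True then show ?thesis by (smt (verit) zero_le_power2)
next
  case False
  then have "\<bar>t\<bar> * 1 \<le> \<bar>t\<bar> * \<bar>t\<bar>" by (intro mult_left_mono) auto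
  then show ?thesis by (simp add: power2_eq_square)
qed

lemma slope_exists:
  assumes r: "\<rho> \<ge> 0" and y: "y \<in> carrier_vec n"
  shows "\<exists>x\<in>carrier_vec n. \<forall>z\<in>carrier_vec n. slope_obj n \<rho> y x \<le> slope_obj n \<rho> y z"
proof -
  define f where "f = (\<lambda>z::nat\<Rightarrow>real. (1/2) * (\<Sum>i<n. (z i - y$i)^2) + \<rho> * (\<Sum>i<n. \<Sum>j\<in>{i<..<n}. \<bar>z i - z j\<bar>))"
  have fe: "f z = slope_obj n \<rho> y (vec n z)" for z
    using y by (simp add: slope_obj_alt f_def Fsum_def)
  let ?X = "product_topology (\<lambda>_. euclideanreal) {..<n}"
  have cont: "continuous_map ?X euclideanreal f"
    unfolding f_def by (intro continuous_intros continuous_map_product_projection) auto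
  define a where "a = restrict (\<lambda>i. y $ i) {..<n}"
  have a: "a \<in> extensional {..<n}" by (simp add: a_def)
  have va: "vec n a = y" using y by (intro eq_vecI) (auto simp: a_def)
  define c where "c = \<rho> * Fsum n y"
  have fa: "f a = c" using fe[of a] va y by (simp add: slope_obj_alt c_def)
  define r where "r = (\<Sum>i<n. \<bar>y$i\<bar>) + 2 * c + 1"
  have coer: "\<forall>i<n. \<bar>z i\<bar> \<le> r" if z: "z \<in> extensional {..<n}" "f z \<le> f a" for z
  proof (intro allI impI)
    fix i assume i: "i < n"
    have "(z i - y$i)^2 \<le> (\<Sum>k<n. (z k - y$k)^2)"
      using i by (intro member_le_sum) auto
    moreover have "0 \<le> \<rho> * (\<Sum>i<n. \<Sum>j\<in>{i<..<n}. \<bar>z i - z j\<bar>)"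
      using r by (intro mult_nonneg_nonneg sum_nonneg) auto
    ultimately have sq: "(z i - y$i)^2 \<le> 2 * c" using z(2) fa unfolding f_def by linarith
    have "\<bar>z i - y$i\<bar> \<le> 1 + (z i - y$i)^2"
      by (rule abs_le_1_sq)
    moreover have "\<bar>y$i\<bar> \<le> (\<Sum>k<n. \<bar>y$k\<bar>)" using i by (intro member_le_sum) auto
    ultimately show "\<bar>z i\<bar> \<le> r" using sq unfolding r_def by linarith
  qed
  obtain x where x: "x \<in> extensional {..<n}" "\<forall>z\<in>extensional {..<n}. f x \<le> f z"
    using exists_min_box[OF cont a coer] by blast
  show ?thesis
  proof (intro bexI ballI)
    show "vec n x \<in> carrier_vec n" by simp
    fix z :: "real vec" assume z: "z \<in> carrier_vec n"
    have "vec n (restrict (\<lambda>i. z $ i) {..<n}) = z" using z by (intro eq_vecI) auto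
    then show "slope_obj n \<rho> y (vec n x) \<le> slope_obj n \<rho> y z"
      using x(2)[rule_format, of "restrict (\<lambda>i. z $ i) {..<n}"] fe by auto
  qed
qed

lemma slope_min_exists_unique:
  assumes r: "\<rho> \<ge> 0" and y: "y \<in> carrier_vec n"
  shows "\<exists>!x. x \<in> carrier_vec n \<and> (\<forall>z\<in>carrier_vec n. slope_obj n \<rho> y x \<le> slope_obj n \<rho> y z)"
  using slope_exists[OF r y] slope_unique[OF r y] by blast

lemma Dcone_carrier: "z \<in> Dcone n \<Longrightarrow> z \<in> carrier_vec n"
  by (simp add: Dcone_def)

lemma Dcone_mono: assumes "z \<in> Dcone n" "i \<le> j" "j < n" shows "z$j \<le> z$i"
  using assms(2,3)
proof (induction j)
  case 0 then show ?case by simp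
next
  case (Suc j)
  show ?case
  proof (cases "i = Suc j")
    case True then show ?thesis by simp
  next
    case False
    then have "z $ Suc j \<le> z $ j" using assms(1) Suc.prems by (auto simp: Dcone_def)
    moreover have "z $ j \<le> z $ i" using Suc False by auto
    ultimately show ?thesis by linarith
  qed
qed

lemma sum_two_diff:
  fixes f g :: "nat \<Rightarrow> real"
  assumes "Suc k < n" "\<And>i. i < n \<Longrightarrow> i \<noteq> k \<Longrightarrow> i \<noteq> Suc k \<Longrightarrow> f i = g i"
  shows "(\<Sum>i<n. f i) - (\<Sum>i<n. g i) = f k + f (Suc k) - g k - g (Suc k)"
proof -
  have "(\<Sum>i<n. f i) - (\<Sum>i<n. g i) = (\<Sum>i<n. f i - g i)" by (simp add: sum_subtractf)
  also have "\<dots> = (\<Sum>i\<in>{k, Suc k}. f i - g i)"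
    using assms by (intro sum.mono_neutral_right) auto
  also have "\<dots> = f k + f (Suc k) - g k - g (Suc k)" by simp
  finally show ?thesis .
qed

definition minz :: "nat \<Rightarrow> real \<Rightarrow> real vec \<Rightarrow> real vec" where
  "minz n \<rho> u = (THE x. x \<in> carrier_vec n \<and> (\<forall>z\<in>carrier_vec n. slope_obj n \<rho> u x \<le> slope_obj n \<rho> u z))"

lemma minz: assumes "\<rho> \<ge> 0" "u \<in> carrier_vec n"
  shows "minz n \<rho> u \<in> carrier_vec n" "\<forall>z\<in>carrier_vec n. slope_obj n \<rho> u (minz n \<rho> u) \<le> slope_obj n \<rho> u z"
  using theI'[OF slope_min_exists_unique[OF assms]] unfolding minz_def by auto

lemma minz_in_D:
  assumes r: "\<rho> \<ge> 0" and u: "u \<in> carrier_vec n" and us: "nonincreasing_vec u"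
  shows "minz n \<rho> u \<in> Dcone n"
proof -
  let ?z = "minz n \<rho> u"
  note zc = minz(1)[OF r u] and zm = minz(2)[OF r u]
  have "?z $ k \<ge> ?z $ (k+1)" if k: "k + 1 < n" for k
  proof (rule ccontr)
    assume lt: "\<not> ?thesis"
    define \<sigma> where "\<sigma> = Transposition.transpose k (Suc k)"
    have p: "\<sigma> permutes {..<n}" unfolding \<sigma>_def using k by (intro permutes_swap_id) auto
    define z' where "z' = vec n (\<lambda>i. ?z $ (\<sigma> i))"
    have z'c: "z' \<in> carrier_vec n" by (simp add: z'_def)
    have F: "Fsum n z' = Fsum n ?z" unfolding z'_def by (rule Fsum_perm[OF p])
    have "(\<Sum>i<n. (z'$i - u$i)^2) - (\<Sum>i<n. (?z$i - u$i)^2)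
        = (z'$k - u$k)^2 + (z'$(Suc k) - u$(Suc k))^2 - (?z$k - u$k)^2 - (?z$(Suc k) - u$(Suc k))^2"
      using k by (intro sum_two_diff) (auto simp: z'_def \<sigma>_def)
    also have "\<dots> = 2 * ((?z$k - ?z$(Suc k)) * (u$k - u$(Suc k)))"
      using k by (simp add: z'_def \<sigma>_def power2_eq_square algebra_simps)
    also have "\<dots> \<le> 0"
    proof -
      have "u$(Suc k) \<le> u$k" using us k unfolding nonincreasing_vec_def using u by auto
      then show ?thesis using lt mult_nonneg_nonpos[of "u$k - u$(Suc k)" "?z$k - ?z$(Suc k)"] by (simp add: mult.commute)
    qed
    finally have "slope_obj n \<rho> u z' \<le> slope_obj n \<rho> u ?z"
      using z'c zc u F by (simp add: slope_obj_alt)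
    then have "\<forall>z\<in>carrier_vec n. slope_obj n \<rho> u z' \<le> slope_obj n \<rho> u z" using zm by force
    then have "z' = ?z" using slope_unique[OF r u z'c zc _ zm] by blast
    then have "z' $ k = ?z $ k" by simp
    then have "?z $ (Suc k) = ?z $ k" using k by (simp add: z'_def \<sigma>_def)
    then show False using lt by simp
  qed
  then show ?thesis using zc by (auto simp: Dcone_def)
qed

lemma slope_on_D:
  assumes z: "z \<in> Dcone n" and u: "u \<in> carrier_vec n"
  shows "slope_obj n \<rho> u z = sqnorm (z - (u - \<rho> \<cdot>\<^sub>v wvec n)) / 2
      + (\<rho> * (\<Sum>i<n. wvec n $ i * u $ i) - \<rho>^2 * (\<Sum>i<n. (wvec n $ i)^2) / 2)"
proof -
  have zc: "z \<in> carrier_vec n" using z by (rule Dcone_carrier)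
  have wc: "wvec n \<in> carrier_vec n" by (simp add: wvec_def)
  have "Fsum n z = (\<Sum>i<n. \<Sum>j\<in>{i<..<n}. z$i - z$j)"
    unfolding Fsum_def
  proof (intro sum.cong refl)
    fix i j assume "i \<in> {..<n}" "j \<in> {i<..<n}"
    then show "\<bar>z $ i - z $ j\<bar> = z$i - z$j" using Dcone_mono[OF z, of i j] by auto
  qed
  also have "\<dots> = (\<Sum>i<n. wvec n $ i * z $ i)"
    by (subst linear_pair_sum) (auto simp: wvec_def intro: sum.cong)
  finally have F: "Fsum n z = (\<Sum>i<n. wvec n $ i * z $ i)" .
  have "sqnorm (z - (u - \<rho> \<cdot>\<^sub>v wvec n)) = (\<Sum>i<n. (z$i - (u$i - \<rho> * wvec n $ i))^2)"
    using zc u wc by (simp add: sqnorm_diff)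
  also have "\<dots> = (\<Sum>i<n. (z$i - u$i)^2 + 2 * \<rho> * (wvec n $ i * z $ i) - 2 * \<rho> * (wvec n $ i * u $ i) + \<rho>^2 * (wvec n $ i)^2)"
    by (intro sum.cong refl) (simp add: power2_eq_square algebra_simps)
  also have "\<dots> = (\<Sum>i<n. (z$i - u$i)^2) + 2 * \<rho> * (\<Sum>i<n. wvec n $ i * z $ i) - 2 * \<rho> * (\<Sum>i<n. wvec n $ i * u $ i) + \<rho>^2 * (\<Sum>i<n. (wvec n $ i)^2)"
    by (simp add: sum.distrib sum_subtractf sum_distrib_left)
  finally show ?thesis using zc u F by (simp add: slope_obj_alt field_simps)
qed

lemma projD_minz:
  assumes r: "\<rho> \<ge> 0" and u: "u \<in> carrier_vec n" and us: "nonincreasing_vec u"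
  shows "projD n (u - \<rho> \<cdot>\<^sub>v wvec n) = minz n \<rho> u"
proof -
  let ?z = "minz n \<rho> u" and ?v = "u - \<rho> \<cdot>\<^sub>v wvec n"
  define C where "C = \<rho> * (\<Sum>i<n. wvec n $ i * u $ i) - \<rho>^2 * (\<Sum>i<n. (wvec n $ i)^2) / 2"
  note zc = minz(1)[OF r u] and zm = minz(2)[OF r u]
  have zD: "?z \<in> Dcone n" by (rule minz_in_D[OF r u us])
  have eq: "\<And>x. x \<in> Dcone n \<Longrightarrow> slope_obj n \<rho> u x = sqnorm (x - ?v) / 2 + C"
    unfolding C_def by (rule slope_on_D[OF _ u])
  show ?thesis unfolding projD_def
  proof (rule the_equality)
    show "?z \<in> Dcone n \<and> (\<forall>z\<in>Dcone n. sqnorm (?z - ?v) \<le> sqnorm (z - ?v))"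
    proof (intro conjI ballI zD)
      fix z assume z: "z \<in> Dcone n"
      have "slope_obj n \<rho> u ?z \<le> slope_obj n \<rho> u z" using zm Dcone_carrier[OF z] by blast
      then show "sqnorm (?z - ?v) \<le> sqnorm (z - ?v)" using eq[OF zD] eq[OF z] by simp
    qed
  next
    fix x assume x: "x \<in> Dcone n \<and> (\<forall>z\<in>Dcone n. sqnorm (x - ?v) \<le> sqnorm (z - ?v))"
    then have "slope_obj n \<rho> u x \<le> slope_obj n \<rho> u ?z" using eq zD by force
    then have "\<forall>z\<in>carrier_vec n. slope_obj n \<rho> u x \<le> slope_obj n \<rho> u z" using zm by force
    then show "x = ?z" using slope_unique[OF r u _ zc _ zm] x Dcone_carrier by blast
  qed
qed

lemma S_prox_formula:
  assumes r: "\<rho> \<ge> 0" and y: "y \<in> carrier_vec n" and p: "\<pi> permutes {..<n}"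
    and u: "u = vec n (\<lambda>i. y $ (\<pi> i))"
  shows "S_prox n \<rho> y = vec n (\<lambda>i. minz n \<rho> u $ (inv_into UNIV \<pi> i))"
proof -
  have uc: "u \<in> carrier_vec n" using u by simp
  let ?m = "minz n \<rho> u"
  note mc = minz(1)[OF r uc] and mm = minz(2)[OF r uc]
  define xs where "xs = vec n (\<lambda>i. ?m $ (inv_into UNIV \<pi> i))"
  have xsc: "xs \<in> carrier_vec n" by (simp add: xs_def)
  have pin: "\<And>i. i < n \<Longrightarrow> \<pi> i < n" using p by (meson lessThan_iff permutes_in_image)
  have bk: "vec n (\<lambda>i. xs $ (\<pi> i)) = ?m"
  proof (rule eq_vecI)
    fix i assume i: "i < dim_vec ?m"
    then have i': "i < n" using mc by simp
    have "vec n (\<lambda>i. xs $ (\<pi> i)) $ i = ?m $ (inv_into UNIV \<pi> (\<pi> i))"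
      using i' pin[OF i'] by (simp add: xs_def)
    also have "inv_into UNIV \<pi> (\<pi> i) = i" by (rule permutes_inverses(2)[OF p])
    finally show "vec n (\<lambda>i. xs $ (\<pi> i)) $ i = ?m $ i" .
  next
    show "dim_vec (vec n (\<lambda>i. xs $ (\<pi> i))) = dim_vec ?m" using mc by simp
  qed
  have g: "slope_obj n \<rho> u ?m = slope_obj n \<rho> y xs"
    using slope_perm[OF p xsc y, of \<rho>] unfolding bk u[symmetric] .
  have min: "\<forall>z\<in>carrier_vec n. slope_obj n \<rho> y xs \<le> slope_obj n \<rho> y z"
  proof
    fix z :: "real vec" assume z: "z \<in> carrier_vec n"
    have "slope_obj n \<rho> u (vec n (\<lambda>i. z $ (\<pi> i))) = slope_obj n \<rho> y z"
      using slope_perm[OF p z y, of \<rho>] unfolding u[symmetric] .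
    moreover have "slope_obj n \<rho> u ?m \<le> slope_obj n \<rho> u (vec n (\<lambda>i. z $ (\<pi> i)))"
      using mm by simp
    ultimately show "slope_obj n \<rho> y xs \<le> slope_obj n \<rho> y z" using g by simp
  qed
  show ?thesis unfolding S_prox_def xs_def[symmetric]
  proof (rule the_equality)
    show "xs \<in> carrier_vec n \<and> (\<forall>z\<in>carrier_vec n. slope_obj n \<rho> y xs \<le> slope_obj n \<rho> y z)"
      using xsc min by blast
    fix x assume x: "x \<in> carrier_vec n \<and> (\<forall>z\<in>carrier_vec n. slope_obj n \<rho> y x \<le> slope_obj n \<rho> y z)"
    show "x = xs" using slope_unique[OF r y _ xsc _ min, of x] x by blast
  qed
qed

lemma var_ineq:
  assumes x: "x \<in> Dcone n" and v: "v \<in> carrier_vec n"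
    and mn: "\<forall>z\<in>Dcone n. sqnorm (x - v) \<le> sqnorm (z - v)"
    and e: "\<epsilon> > 0"
    and dir: "\<And>t. 0 < t \<Longrightarrow> t \<le> \<epsilon> \<Longrightarrow> vec n (\<lambda>i. x$i + t * d i) \<in> Dcone n"
  shows "0 \<le> (\<Sum>i<n. (x$i - v$i) * d i)"
proof (rule ccontr)
  have xc: "x \<in> carrier_vec n" using x by (rule Dcone_carrier)
  define a where "a = (\<Sum>i<n. (x$i - v$i) * d i)"
  define Q where "Q = (\<Sum>i<n. (d i)^2)"
  have Q0: "Q \<ge> 0" unfolding Q_def by (intro sum_nonneg) auto
  assume "\<not> 0 \<le> (\<Sum>i<n. (x$i - v$i) * d i)"
  then have a0: "a < 0" unfolding a_def by simp
  define t where "t = min \<epsilon> (- a / (Q + 1))"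
  have "a / (Q + 1) < 0" using a0 Q0 by (intro divide_neg_pos) auto
  then have t0: "0 < t" using e by (simp add: t_def)
  have te: "t \<le> \<epsilon>" by (simp add: t_def)
  have exp: "sqnorm (vec n (\<lambda>i. x$i + t * d i) - v) = sqnorm (x - v) + 2 * t * a + t^2 * Q"
  proof -
    have "sqnorm (vec n (\<lambda>i. x$i + t * d i) - v) = (\<Sum>i<n. (x$i + t * d i - v$i)^2)"
      using v by (simp add: sqnorm_diff)
    also have "\<dots> = (\<Sum>i<n. (x$i - v$i)^2 + 2 * t * ((x$i - v$i) * d i) + t^2 * (d i)^2)"
      by (intro sum.cong refl) (simp add: power2_eq_square algebra_simps)
    also have "\<dots> = (\<Sum>i<n. (x$i - v$i)^2) + 2 * t * a + t^2 * Q"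
      by (simp add: sum.distrib sum_distrib_left a_def Q_def)
    finally show ?thesis using xc v by (simp add: sqnorm_diff)
  qed
  have "sqnorm (x - v) \<le> sqnorm (vec n (\<lambda>i. x$i + t * d i) - v)" using mn dir[OF t0 te] by blast
  then have "0 \<le> 2 * t * a + t^2 * Q" using exp by simp
  then have "0 \<le> t * (2 * a + t * Q)" by (simp add: power2_eq_square algebra_simps)
  then have c1: "0 \<le> 2 * a + t * Q" using t0 by (simp add: zero_le_mult_iff)
  have "t * Q \<le> (- a / (Q + 1)) * Q" using Q0 by (intro mult_right_mono) (auto simp: t_def)
  also have "\<dots> = - a * (Q / (Q + 1))" by simp
  also have "\<dots> \<le> - a * 1" using a0 Q0 by (intro mult_left_mono) auto
  finally have "t * Q \<le> - a" by simp
  then show False using c1 a0 by linarith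
qed

lemma sum_indicator_le:
  fixes f :: "nat \<Rightarrow> real"
  assumes "k < n"
  shows "(\<Sum>i<n. f i * (if i \<le> k then 1 else 0)) = (\<Sum>i\<le>k. f i)"
proof -
  have "(\<Sum>i<n. f i * (if i \<le> k then 1 else 0)) = (\<Sum>i<n. if i \<le> k then f i else 0)"
    by (intro sum.cong refl) auto
  also have "\<dots> = (\<Sum>i\<in>{..<n} \<inter> {i. i \<le> k}. f i)" by (simp add: sum.inter_restrict)
  also have "{..<n} \<inter> {i. i \<le> k} = {..k}" using assms by auto
  finally show ?thesis .
qed

lemma kkt:
  assumes x: "x \<in> Dcone n" and v: "v \<in> carrier_vec n"
    and mn: "\<forall>z\<in>Dcone n. sqnorm (x - v) \<le> sqnorm (z - v)"
  defines "lam \<equiv> vec (n-1) (\<lambda>k. \<Sum>i\<le>k. v$i - x$i)"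
  shows "x - v + transpose_mat (Bmat n) *\<^sub>v lam = 0\<^sub>v n"
    and "\<forall>k<n-1. lam $ k \<le> 0"
    and "\<forall>k<n-1. x $ k \<noteq> x $ (k+1) \<longrightarrow> lam $ k = 0"
proof -
  have xc: "x \<in> carrier_vec n" using x by (rule Dcone_carrier)
  have lc: "lam \<in> carrier_vec (n-1)" by (simp add: lam_def)
  have xD: "\<And>i. i + 1 < n \<Longrightarrow> x $ (i+1) \<le> x $ i" using x by (auto simp: Dcone_def)
  have s1: "0 \<le> (\<Sum>i<n. (x$i - v$i) * 1)"
    by (rule var_ineq[OF x v mn, of 1]) (use xc xD in \<open>auto simp: Dcone_def\<close>)
  have s2: "0 \<le> (\<Sum>i<n. (x$i - v$i) * (-1))"
    by (rule var_ineq[OF x v mn, of 1]) (use xc xD in \<open>auto simp: Dcone_def\<close>)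
  have tot: "(\<Sum>i<n. v$i - x$i) = 0" using s1 s2 by (simp add: sum_subtractf sum_negf)
  have pos: "0 \<le> (\<Sum>i\<le>k. x$i - v$i)" if k: "k < n-1" for k
  proof -
    have "0 \<le> (\<Sum>i<n. (x$i - v$i) * (if i \<le> k then 1 else 0))"
    proof (rule var_ineq[OF x v mn, of 1])
      fix t :: real assume t: "0 < t" "t \<le> 1"
      show "vec n (\<lambda>i. x $ i + t * (if i \<le> k then 1 else 0)) \<in> Dcone n"
        unfolding Dcone_def
      proof (intro CollectI conjI allI impI)
        fix i assume i: "i + 1 < n"
        show "vec n (\<lambda>i. x $ i + t * (if i \<le> k then 1 else 0)) $ (i + 1)
              \<le> vec n (\<lambda>i. x $ i + t * (if i \<le> k then 1 else 0)) $ i"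
          using i xD[OF i] t by auto
      qed simp
    qed simp
    then show ?thesis using k sum_indicator_le[of k n "\<lambda>i. x$i - v$i"] by simp
  qed
  have neg: "(\<Sum>i\<le>k. x$i - v$i) \<le> 0" if k: "k < n-1" and ne: "x $ k \<noteq> x $ (k+1)" for k
  proof -
    have "k + 1 < n" using k by simp
    then have gt: "x $ (k+1) < x $ k" using xD[of k] ne by auto
    have "0 \<le> (\<Sum>i<n. (x$i - v$i) * (- (if i \<le> k then 1 else 0)))"
    proof (rule var_ineq[OF x v mn, of "x $ k - x $ (k+1)"])
      fix t :: real assume t: "0 < t" "t \<le> x $ k - x $ (k+1)"
      show "vec n (\<lambda>i. x $ i + t * - (if i \<le> k then 1 else 0)) \<in> Dcone n"
        unfolding Dcone_def
      proof (intro CollectI conjI allI impI)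
        fix i assume i: "i + 1 < n"
        show "vec n (\<lambda>i. x $ i + t * - (if i \<le> k then 1 else 0)) $ (i + 1)
              \<le> vec n (\<lambda>i. x $ i + t * - (if i \<le> k then 1 else 0)) $ i"
          using i xD[OF i] t by (cases "i = k") auto
      qed simp
    qed (use gt in simp)
    then have "0 \<le> - (\<Sum>i<n. (x$i - v$i) * (if i \<le> k then 1 else 0))"
      by (simp add: sum_negf)
    then show ?thesis using k sum_indicator_le[of k n "\<lambda>i. x$i - v$i"] by simp
  qed
  have lamk: "lam $ k = - (\<Sum>i\<le>k. x$i - v$i)" if "k < n-1" for k
    using that by (simp add: lam_def sum_negf[symmetric])
  show "\<forall>k<n-1. lam $ k \<le> 0" using pos lamk by fastforce
  show "\<forall>k<n-1. x $ k \<noteq> x $ (k+1) \<longrightarrow> lam $ k = 0"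
    using pos neg lamk by (metis neg_equal_zero order_antisym)
  show "x - v + transpose_mat (Bmat n) *\<^sub>v lam = 0\<^sub>v n"
  proof (rule eq_vecI)
    fix j assume "j < dim_vec (0\<^sub>v n :: real vec)"
    then have j: "j < n" by simp
    have bt: "(transpose_mat (Bmat n) *\<^sub>v lam) $ j = (if j < n-1 then lam$j else 0) - (if 0 < j then lam$(j-1) else 0)"
      by (rule BT_mult[OF lc j])
    have "x $ j - v $ j + (if j < n-1 then lam$j else 0) - (if 0 < j then lam$(j-1) else 0) = 0"
    proof (cases "j < n - 1")
      case True
      show ?thesis
      proof (cases j)
        case 0 then show ?thesis using True by (simp add: lam_def)
      next
        case (Suc m)
        have "lam $ j = lam $ m + (v $ j - x $ j)" using True Suc by (simp add: lam_def)
        then show ?thesis using Suc True by simp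
      qed
    next
      case False
      then have jn: "j = n - 1" using j by simp
      have "(\<Sum>i<n. v$i - x$i) = (\<Sum>i<j. v$i - x$i) + (v$j - x$j)"
      proof -
        have nj: "n = Suc j" using jn j by simp
        show ?thesis unfolding nj by simp
      qed
      then have e: "(\<Sum>i<j. v$i - x$i) = x$j - v$j" using tot by simp
      show ?thesis
      proof (cases j)
        case 0 then show ?thesis using e False by simp
      next
        case (Suc m)
        have "lam $ m = (\<Sum>i\<le>m. v$i - x$i)" using Suc jn by (simp add: lam_def)
        also have "\<dots> = (\<Sum>i<j. v$i - x$i)" using Suc by (simp add: lessThan_Suc_atMost)
        finally show ?thesis using False Suc e by simp
      qed
    qed
    moreover have dB: "dim_col (Bmat n) = n" by (simp add: Bmat_def)
    ultimately show "(x - v + transpose_mat (Bmat n) *\<^sub>v lam) $ j = 0\<^sub>v n $ j"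
      using bt j xc v by simp
  next
    show "dim_vec (x - v + transpose_mat (Bmat n) *\<^sub>v lam) = dim_vec (0\<^sub>v n :: real vec)"
      using xc by (simp add: Bmat_def)
  qed
qed

definition selE :: "nat \<Rightarrow> nat set \<Rightarrow> real mat" where
  "selE n K = mat (n-1) (card K) (\<lambda>(a,b). if a = pick K b then 1 else 0)"

lemma selE_carrier[simp]: "selE n K \<in> carrier_mat (n-1) (card K)"
  by (simp add: selE_def)

lemma card_K: "K \<subseteq> {..<m} \<Longrightarrow> card {i. i < m \<and> i \<in> K} = card K"
proof -
  assume "K \<subseteq> {..<m}"
  then have "{i. i < m \<and> i \<in> K} = K" by auto
  then show ?thesis by simp
qed

lemma pick_K: assumes "K \<subseteq> {..<m}" "b < card K"
  shows "pick K b \<in> K" "pick K b < m"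
proof -
  show "pick K b \<in> K" using pick_in_set[of b K] assms(2) by auto
  then show "pick K b < m" using assms(1) by auto
qed

lemma pick_lessThan: assumes "j < n" shows "pick {..<n} j = j"
proof -
  have "{a \<in> {..<n}. a < j} = {..<j}" using assms by auto
  then show ?thesis using pick_card_in_set[of j "{..<n}"] assms by simp
qed

lemma pick_inj: assumes "b < card K" "b' < card K" "pick K b = pick K b'" shows "b = b'"
  using pick_mono[of b K b'] pick_mono[of b' K b] assms by (metis less_linear less_irrefl)

lemma sum_single:
  fixes g :: "nat \<Rightarrow> real"
  assumes "p < m"
  shows "(\<Sum>a<m. (if a = p then 1 else 0) * g a) = g p"
proof -
  have "(\<Sum>a<m. (if a = p then 1 else 0) * g a) = (\<Sum>a<m. if a = p then g a else 0)"
    by (intro sum.cong refl) auto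
  also have "\<dots> = g p" using assms by simp
  finally show ?thesis .
qed

lemma Brows_eq: assumes K: "K \<subseteq> {..<n-1}"
  shows "Brows n K = transpose_mat (selE n K) * Bmat n"
proof (rule eq_matI)
  show dr: "dim_row (Brows n K) = dim_row (transpose_mat (selE n K) * Bmat n)"
    using card_K[OF K] by (simp add: Brows_def dim_submatrix Bmat_def selE_def)
  show dc: "dim_col (Brows n K) = dim_col (transpose_mat (selE n K) * Bmat n)"
    by (simp add: Brows_def dim_submatrix Bmat_def)
  fix b j assume b: "b < dim_row (transpose_mat (selE n K) * Bmat n)"
    and j: "j < dim_col (transpose_mat (selE n K) * Bmat n)"
  have b': "b < card K" using b by (simp add: selE_def)
  have j': "j < n" using j by (simp add: Bmat_def)
  have pk: "pick K b < n - 1" using pick_K[OF K b'] by simp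
  have "(transpose_mat (selE n K) * Bmat n) $$ (b, j) = (\<Sum>a<n-1. (if a = pick K b then 1 else 0) * Bmat n $$ (a, j))"
    using b' j' by (simp add: selE_def Bmat_def scalar_prod_def lessThan_atLeast0)
  also have "\<dots> = Bmat n $$ (pick K b, j)" by (rule sum_single[OF pk])
  also have "\<dots> = Brows n K $$ (b, j)"
    unfolding Brows_def using b' j' card_K[OF K]
    by (subst submatrix_index) (auto simp: Bmat_def pick_lessThan)
  finally show "Brows n K $$ (b, j) = (transpose_mat (selE n K) * Bmat n) $$ (b, j)" by simp
qed

lemma EtE: assumes K: "K \<subseteq> {..<n-1}"
  shows "transpose_mat (selE n K) * selE n K = 1\<^sub>m (card K)"
proof (rule eq_matI)
  fix b b' assume b: "b < dim_row (1\<^sub>m (card K) :: real mat)" and b': "b' < dim_col (1\<^sub>m (card K) :: real mat)"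
  then have bb: "b < card K" "b' < card K" by auto
  have pk: "pick K b < n - 1" using pick_K[OF K bb(1)] by simp
  have "(transpose_mat (selE n K) * selE n K) $$ (b, b') = (\<Sum>a<n-1. (if a = pick K b then 1 else 0) * (if a = pick K b' then 1 else 0))"
    using bb by (simp add: selE_def scalar_prod_def lessThan_atLeast0)
  also have "\<dots> = (if pick K b = pick K b' then 1 else 0)" by (rule sum_single[OF pk])
  also have "\<dots> = 1\<^sub>m (card K) $$ (b, b')" using bb pick_inj[OF bb] by auto
  finally show "(transpose_mat (selE n K) * selE n K) $$ (b, b') = 1\<^sub>m (card K) $$ (b, b')" .
qed (auto simp: selE_def)

lemma EEt: assumes K: "K \<subseteq> {..<n-1}"
  shows "selE n K * transpose_mat (selE n K) = diag_of (n-1) (\<lambda>i. if i \<in> K then 1 else 0)"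
proof (rule eq_matI)
  fix a a' assume a: "a < dim_row (diag_of (n-1) (\<lambda>i. if i \<in> K then 1 else 0))"
    and a': "a' < dim_col (diag_of (n-1) (\<lambda>i. if i \<in> K then 1 else 0))"
  then have aa: "a < n-1" "a' < n-1" by (auto simp: diag_of_def)
  have "(selE n K * transpose_mat (selE n K)) $$ (a, a') = (\<Sum>b<card K. (if a = pick K b then 1 else 0) * (if a' = pick K b then 1 else 0))"
    using aa by (simp add: selE_def scalar_prod_def lessThan_atLeast0)
  also have "\<dots> = (if a \<in> K \<and> a = a' then 1 else 0)"
  proof (cases "a \<in> K")
    case True
    define b0 where "b0 = card {x\<in>K. x < a}"
    have fin: "finite K" using K finite_subset by blast
    have "{x\<in>K. x < a} \<subset> K" using True by auto
    then have b0: "b0 < card K" unfolding b0_def using fin by (simp add: psubset_card_mono)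
    have pb0: "pick K b0 = a" unfolding b0_def by (rule pick_card_in_set[OF True])
    have "(\<Sum>b<card K. (if a = pick K b then 1 else 0) * (if a' = pick K b then 1 else (0::real)))
        = (\<Sum>b<card K. (if b = b0 then 1 else 0) * (if a' = a then 1 else 0))"
    proof (rule sum.cong[OF refl])
      fix b assume "b \<in> {..<card K}"
      then have "b < card K" by simp
      then have "(a = pick K b) = (b = b0)" using pick_inj[OF _ b0] pb0 by auto
      then show "(if a = pick K b then 1 else 0) * (if a' = pick K b then 1 else (0::real)) = (if b = b0 then 1 else 0) * (if a' = a then 1 else 0)"
        using pb0 by auto
    qed
    also have "\<dots> = (if a' = a then 1 else 0)" by (rule sum_single[OF b0])
    finally show ?thesis using True by auto
  next
    case False
    have "(\<Sum>b<card K. (if a = pick K b then 1 else 0) * (if a' = pick K b then 1 else (0::real))) = 0"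
    proof (intro sum.neutral ballI)
      fix b assume "b \<in> {..<card K}"
      then have "pick K b \<in> K" using pick_K[OF K] by simp
      then show "(if a = pick K b then 1 else 0) * (if a' = pick K b then 1 else (0::real)) = 0" using False by auto
    qed
    then show ?thesis using False by simp
  qed
  also have "\<dots> = diag_of (n-1) (\<lambda>i. if i \<in> K then 1 else 0) $$ (a, a')"
    using aa by (simp add: diag_of_def)
  finally show "(selE n K * transpose_mat (selE n K)) $$ (a, a') = diag_of (n-1) (\<lambda>i. if i \<in> K then 1 else 0) $$ (a, a')" .
qed (auto simp: selE_def diag_of_def)

lemma BT_inj: assumes d: "d \<in> carrier_vec (n-1)" and z: "transpose_mat (Bmat n) *\<^sub>v d = 0\<^sub>v n"
  shows "d = 0\<^sub>v (n-1)"
proof -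
  have e: "\<And>j. j < n \<Longrightarrow> (if j < n-1 then d$j else 0) - (if 0 < j then d$(j-1) else 0) = 0"
  proof -
    fix j assume j: "j < n"
    have "(transpose_mat (Bmat n) *\<^sub>v d) $ j = 0" using z j by simp
    then show "(if j < n-1 then d$j else 0) - (if 0 < j then d$(j-1) else 0) = 0"
      using BT_mult[OF d j] by simp
  qed
  have "\<forall>j. j < n - 1 \<longrightarrow> d $ j = 0"
  proof (intro allI)
    fix j show "j < n - 1 \<longrightarrow> d $ j = 0"
    proof (induction j)
      case 0 then show ?case using e[of 0] by auto
    next
      case (Suc j)
      then show ?case using e[of "Suc j"] by auto
    qed
  qed
  then show ?thesis using d by (intro eq_vecI) auto
qed

lemma selE_carrier'[simp]: "selE n K \<in> carrier_mat (n - Suc 0) (card K)"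
  using selE_carrier[of n K] by simp

lemma Bmat_carrier'[simp]: "Bmat n \<in> carrier_mat (n - Suc 0) n"
  using Bmat_carrier[of n] by simp

lemma Brows_carrier: assumes K: "K \<subseteq> {..<n-1}" shows "Brows n K \<in> carrier_mat (card K) n"
proof -
  have "transpose_mat (selE n K) \<in> carrier_mat (card K) (n-1)" by simp
  from mult_carrier_mat[OF this Bmat_carrier] show ?thesis unfolding Brows_eq[OF K] .
qed

lemma Brows_full: assumes K: "K \<subseteq> {..<n-1}"
  shows "full_row_rank (Brows n K)"
  unfolding full_row_rank_def
proof (intro ballI impI)
  let ?E = "selE n K" and ?B = "Bmat n"
  have Bc: "Brows n K \<in> carrier_mat (card K) n" by (rule Brows_carrier[OF K])
  fix c assume c: "c \<in> carrier_vec (dim_row (Brows n K))"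
    and z: "transpose_mat (Brows n K) *\<^sub>v c = 0\<^sub>v (dim_col (Brows n K))"
  have cc: "c \<in> carrier_vec (card K)" using c Bc by simp
  have "transpose_mat (Brows n K) = transpose_mat ?B * ?E"
    unfolding Brows_eq[OF K] by (subst transpose_mult[of _ "card K" "n-1" _ n]) auto
  moreover have "transpose_mat ?B *\<^sub>v (?E *\<^sub>v c) = (transpose_mat ?B * ?E) *\<^sub>v c"
    by (rule assoc_mult_mat_vec[symmetric, of _ n "n-1" _ "card K"]) (use cc in auto)
  ultimately have "transpose_mat ?B *\<^sub>v (?E *\<^sub>v c) = 0\<^sub>v n"
    using z Bc by simp
  moreover have "?E *\<^sub>v c \<in> carrier_vec (n-1)" by (rule mult_mat_vec_carrier[OF selE_carrier cc])
  ultimately have "?E *\<^sub>v c = 0\<^sub>v (n-1)" by (intro BT_inj)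
  moreover have "transpose_mat ?E *\<^sub>v 0\<^sub>v (n-1) = 0\<^sub>v (card K)"
    by (intro eq_vecI) (auto simp: selE_def)
  ultimately have "transpose_mat ?E *\<^sub>v (?E *\<^sub>v c) = 0\<^sub>v (card K)" by simp
  moreover have "transpose_mat ?E *\<^sub>v (?E *\<^sub>v c) = c"
    using EtE[OF K] cc by (simp flip: assoc_mult_mat_vec[of _ "card K" "n-1" _ "card K"])
  ultimately show "c = 0\<^sub>v (dim_row (Brows n K))" using Bc by simp
qed

lemma self_scalar_zero: "(z::real vec) \<bullet> z = 0 \<Longrightarrow> z = 0\<^sub>v (dim_vec z)"
proof -
  assume a: "z \<bullet> z = 0"
  have "(\<Sum>i\<in>{0..<dim_vec z}. z$i * z$i) = 0" using a by (simp add: scalar_prod_def)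
  then have "\<forall>i\<in>{0..<dim_vec z}. z$i * z$i = 0"
    by (subst sum_nonneg_eq_0_iff[symmetric]) auto
  then show ?thesis by (intro eq_vecI) auto
qed

lemma G_inv: assumes K: "K \<subseteq> {..<n-1}"
  shows "\<exists>Gi \<in> carrier_mat (card K) (card K). Brows n K * transpose_mat (Brows n K) * Gi = 1\<^sub>m (card K)
          \<and> Gi * (Brows n K * transpose_mat (Brows n K)) = 1\<^sub>m (card K)"
proof -
  let ?A = "Brows n K"
  let ?G = "?A * transpose_mat ?A"
  have Ac: "?A \<in> carrier_mat (card K) n" by (rule Brows_carrier[OF K])
  have Gc: "?G \<in> carrier_mat (card K) (card K)" using Ac by simp
  have "det ?G \<noteq> 0"
  proof
    assume "det ?G = 0"
    then obtain c where c: "c \<in> carrier_vec (card K)" "c \<noteq> 0\<^sub>v (card K)" "?G *\<^sub>v c = 0\<^sub>v (card K)"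
      using det_0_iff_vec_prod_zero[OF Gc] by blast
    let ?z = "transpose_mat ?A *\<^sub>v c"
    have zc: "?z \<in> carrier_vec n" using Ac c by simp
    have "?G *\<^sub>v c = ?A *\<^sub>v ?z" using Ac c by simp
    then have h: "?A *\<^sub>v ?z = 0\<^sub>v (card K)" using c(3) by simp
    have "c \<bullet> (?A *\<^sub>v ?z) = 0" unfolding h using c(1) by simp
    moreover have "?z \<bullet> ?z = c \<bullet> (?A *\<^sub>v ?z)" by (rule transpose_vec_mult_scalar[OF Ac zc c(1)])
    ultimately have "?z \<bullet> ?z = 0" by simp
    then have "?z = 0\<^sub>v (dim_vec ?z)" by (rule self_scalar_zero)
    then have "transpose_mat ?A *\<^sub>v c = 0\<^sub>v (dim_col ?A)" using Ac by simp
    then have "c = 0\<^sub>v (dim_row ?A)" using Brows_full[OF K] c Ac unfolding full_row_rank_def by simp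
    then show False using c Ac by simp
  qed
  from det_non_zero_imp_unit[OF Gc this, unfolded Units_def, of "()"]
  obtain Gi where "Gi \<in> carrier_mat (card K) (card K)" "Gi * ?G = 1\<^sub>m (card K)" "?G * Gi = 1\<^sub>m (card K)"
    by (auto simp: ring_mat_def)
  then show ?thesis by blast
qed

lemma mat_inv_eq: assumes A: "A \<in> carrier_mat m m" and X: "X \<in> carrier_mat m m"
  and AX: "A * X = 1\<^sub>m m" and XA: "X * A = 1\<^sub>m m"
  shows "mat_inv A = X"
  unfolding mat_inv_def
proof (rule the_equality)
  show "X \<in> carrier_mat (dim_row A) (dim_row A) \<and> A * X = 1\<^sub>m (dim_row A) \<and> X * A = 1\<^sub>m (dim_row A)"
    using A X AX XA by simp
  fix Y assume Y: "Y \<in> carrier_mat (dim_row A) (dim_row A) \<and> A * Y = 1\<^sub>m (dim_row A) \<and> Y * A = 1\<^sub>m (dim_row A)"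
  then have Yc: "Y \<in> carrier_mat m m" using A by simp
  have "Y = Y * (A * X)" using AX Yc by simp
  also have "\<dots> = (Y * A) * X" using Yc A X by simp
  also have "\<dots> = X" using Y A X by simp
  finally show "Y = X" .
qed

lemma assoc_dim: "dim_col (A::real mat) = dim_row B \<Longrightarrow> dim_col B = dim_row C \<Longrightarrow> (A*B)*C = A*(B*C)"
  by (rule assoc_mult_mat[of A "dim_row A" "dim_col A" B "dim_col B" C "dim_col C"]) auto

lemma MP_unique:
  fixes A X Y :: "real mat"
  assumes A: "A \<in> carrier_mat r c" and X: "X \<in> carrier_mat c r" and Y: "Y \<in> carrier_mat c r"
    and X1: "A * X * A = A" and X2: "X * A * X = X" and X3: "transpose_mat (A * X) = A * X" and X4: "transpose_mat (X * A) = X * A"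
    and Y1: "A * Y * A = A" and Y2: "Y * A * Y = Y" and Y3: "transpose_mat (A * Y) = A * Y" and Y4: "transpose_mat (Y * A) = Y * A"
  shows "X = Y"
proof -
  have AX: "A * X \<in> carrier_mat r r" and AY: "A * Y \<in> carrier_mat r r" using A X Y by auto
  have XA: "X * A \<in> carrier_mat c c" and YA: "Y * A \<in> carrier_mat c c" using A X Y by auto
  have e1: "A * X = A * Y"
  proof -
    have "A * X = (A * Y * A) * X" using Y1 by simp
    also have "\<dots> = (A * Y) * (A * X)" by (rule assoc_mult_mat[OF AY A X])
    also have "\<dots> = transpose_mat (A * Y) * transpose_mat (A * X)" using X3 Y3 by simp
    also have "\<dots> = transpose_mat ((A * X) * (A * Y))" using AX AY by (simp add: transpose_mult)
    also have "(A * X) * (A * Y) = (A * X * A) * Y" using A X Y by (simp add: assoc_dim del: assoc_mult_mat)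
    also have "\<dots> = A * Y" using X1 by simp
    finally show ?thesis using Y3 by simp
  qed
  have e2: "X * A = Y * A"
  proof -
    have "X * A = X * (A * Y * A)" using Y1 by simp
    also have "\<dots> = (X * A) * (Y * A)" using A X Y by (simp add: assoc_dim del: assoc_mult_mat)
    also have "\<dots> = transpose_mat (X * A) * transpose_mat (Y * A)" using X4 Y4 by simp
    also have "\<dots> = transpose_mat ((Y * A) * (X * A))" using XA YA by (simp add: transpose_mult)
    also have "(Y * A) * (X * A) = Y * (A * X * A)" using A X Y by (simp add: assoc_dim del: assoc_mult_mat)
    also have "\<dots> = Y * A" using X1 by simp
    finally show ?thesis using Y4 by simp
  qed
  have "X = X * A * X" using X2 by simp
  also have "\<dots> = X * (A * X)" using A X by (simp add: assoc_dim del: assoc_mult_mat)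
  also have "\<dots> = X * (A * Y)" using e1 by simp
  also have "\<dots> = (X * A) * Y" using A X Y by (simp add: assoc_dim del: assoc_mult_mat)
  also have "\<dots> = (Y * A) * Y" using e2 by simp
  also have "\<dots> = Y" using Y2 by simp
  finally show ?thesis .
qed

lemma pinv_eq:
  fixes A X :: "real mat"
  assumes A: "A \<in> carrier_mat r c" and X: "X \<in> carrier_mat c r"
    and X1: "A * X * A = A" and X2: "X * A * X = X" and X3: "transpose_mat (A * X) = A * X" and X4: "transpose_mat (X * A) = X * A"
  shows "pinv A = X"
  unfolding pinv_def
proof (rule the_equality)
  show "X \<in> carrier_mat (dim_col A) (dim_row A) \<and> A * X * A = A \<and> X * A * X = X \<and>
       transpose_mat (A * X) = A * X \<and> transpose_mat (X * A) = X * A" using assms by simp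
  fix Y assume "Y \<in> carrier_mat (dim_col A) (dim_row A) \<and> A * Y * A = A \<and> Y * A * Y = Y \<and>
       transpose_mat (A * Y) = A * Y \<and> transpose_mat (Y * A) = Y * A"
  then show "Y = X" using MP_unique[OF A X, of Y] assms by auto
qed

lemma pinv_sel:
  fixes E G Gi :: "real mat"
  assumes E: "E \<in> carrier_mat m k" and G: "G \<in> carrier_mat k k" and Gi: "Gi \<in> carrier_mat k k"
    and EtE: "transpose_mat E * E = 1\<^sub>m k" and GGi: "G * Gi = 1\<^sub>m k" and GiG: "Gi * G = 1\<^sub>m k"
  shows "pinv (E * G * transpose_mat E) = E * Gi * transpose_mat E"
proof -
  have Et: "transpose_mat E \<in> carrier_mat k m" using E by simp
  have d: "dim_row E = m" "dim_col E = k" "dim_row G = k" "dim_col G = k" "dim_row Gi = k" "dim_col Gi = k"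
    using E G Gi by auto
  have r1: "\<And>(Z::real mat). dim_row Z = k \<Longrightarrow> transpose_mat E * (E * Z) = Z"
  proof -
    fix Z :: "real mat" assume Z: "dim_row Z = k"
    have "transpose_mat E * (E * Z) = (transpose_mat E * E) * Z" using d Z by (simp add: assoc_dim)
    then show "transpose_mat E * (E * Z) = Z" using EtE Z by simp
  qed
  have r2: "\<And>(Z::real mat). dim_row Z = k \<Longrightarrow> G * (Gi * Z) = Z"
  proof -
    fix Z :: "real mat" assume Z: "dim_row Z = k"
    have "G * (Gi * Z) = (G * Gi) * Z" using d Z by (simp add: assoc_dim)
    then show "G * (Gi * Z) = Z" using GGi Z by simp
  qed
  have r3: "\<And>(Z::real mat). dim_row Z = k \<Longrightarrow> Gi * (G * Z) = Z"
  proof -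
    fix Z :: "real mat" assume Z: "dim_row Z = k"
    have "Gi * (G * Z) = (Gi * G) * Z" using d Z by (simp add: assoc_dim)
    then show "Gi * (G * Z) = Z" using GiG Z by simp
  qed
  have tEEt: "transpose_mat (E * transpose_mat E) = E * transpose_mat E"
    using E by (simp add: transpose_mult[OF E Et])
  have e1: "E * G * transpose_mat E * (E * Gi * transpose_mat E) = E * transpose_mat E"
    using d by (simp add: assoc_dim r1 r2 del: assoc_mult_mat)
  have e2: "E * Gi * transpose_mat E * (E * G * transpose_mat E) = E * transpose_mat E"
    using d by (simp add: assoc_dim r1 r3 del: assoc_mult_mat)
  show ?thesis
  proof (rule pinv_eq[of _ m m])
    show "E * G * transpose_mat E \<in> carrier_mat m m" using E G by simp
    show "E * Gi * transpose_mat E \<in> carrier_mat m m" using E Gi by simp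
    show "E * G * transpose_mat E * (E * Gi * transpose_mat E) * (E * G * transpose_mat E) = E * G * transpose_mat E"
      unfolding e1 using d by (simp add: assoc_dim r1 del: assoc_mult_mat)
    show "E * Gi * transpose_mat E * (E * G * transpose_mat E) * (E * Gi * transpose_mat E) = E * Gi * transpose_mat E"
      unfolding e2 using d by (simp add: assoc_dim r1 del: assoc_mult_mat)
    show "transpose_mat (E * G * transpose_mat E * (E * Gi * transpose_mat E)) = E * G * transpose_mat E * (E * Gi * transpose_mat E)"
      unfolding e1 by (rule tEEt)
    show "transpose_mat (E * Gi * transpose_mat E * (E * G * transpose_mat E)) = E * Gi * transpose_mat E * (E * G * transpose_mat E)"
      unfolding e2 by (rule tEEt)
  qed
qed

lemma LA_main:
  assumes K: "K \<subseteq> {..<n-1}"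
  shows "transpose_mat (Bmat n) * pinv (diag_of (n-1) (\<lambda>i. if i \<in> K then 1 else 0) * Bmat n * transpose_mat (Bmat n) * diag_of (n-1) (\<lambda>i. if i \<in> K then 1 else 0)) * Bmat n
       = transpose_mat (Brows n K) * mat_inv (Brows n K * transpose_mat (Brows n K)) * Brows n K"
proof -
  define E where "E = selE n K"
  define B where "B = Bmat n"
  define k where "k = card K"
  define G where "G = Brows n K * transpose_mat (Brows n K)"
  have Ec: "E \<in> carrier_mat (n-1) k" by (simp add: E_def k_def)
  have Bc: "B \<in> carrier_mat (n-1) n" by (simp add: B_def)
  have Bk: "Brows n K = transpose_mat E * B" unfolding E_def B_def by (rule Brows_eq[OF K])
  have Bkc: "Brows n K \<in> carrier_mat k n" unfolding k_def by (rule Brows_carrier[OF K])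
  have Gc: "G \<in> carrier_mat k k" using Bkc by (simp add: G_def)
  obtain Gi where Gi: "Gi \<in> carrier_mat k k" "G * Gi = 1\<^sub>m k" "Gi * G = 1\<^sub>m k"
    using G_inv[OF K] unfolding G_def k_def by blast
  have mi: "mat_inv G = Gi" by (rule mat_inv_eq[OF Gc Gi])
  have EtE': "transpose_mat E * E = 1\<^sub>m k" unfolding E_def k_def by (rule EtE[OF K])
  have Sig: "diag_of (n-1) (\<lambda>i. if i \<in> K then 1 else 0) = E * transpose_mat E"
    unfolding E_def by (rule EEt[OF K, symmetric])
  have tB: "transpose_mat (Brows n K) = transpose_mat B * E"
    unfolding Bk using Ec Bc by (simp add: transpose_mult[of _ k "n-1" _ n])
  have d: "dim_row E = n-1" "dim_col E = k" "dim_row B = n-1" "dim_col B = n" "dim_row Gi = k" "dim_col Gi = k"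
    using Ec Bc Gi by auto
  have C: "diag_of (n-1) (\<lambda>i. if i \<in> K then 1 else 0) * B * transpose_mat B * diag_of (n-1) (\<lambda>i. if i \<in> K then 1 else 0)
      = E * G * transpose_mat E"
    unfolding Sig G_def tB unfolding Bk using d by (simp add: assoc_dim del: assoc_mult_mat)
  have P: "pinv (E * G * transpose_mat E) = E * Gi * transpose_mat E"
    by (rule pinv_sel[OF Ec Gc Gi(1) EtE' Gi(2) Gi(3)])
  show ?thesis
    unfolding B_def[symmetric] unfolding G_def[symmetric] unfolding C P mi unfolding tB unfolding Bk
    using d by (simp add: assoc_dim del: assoc_mult_mat)
qed

lemma comm_lemma:
  fixes Bk Gi T D :: "real mat"
  assumes Bk: "Bk \<in> carrier_mat k n" and Gi: "Gi \<in> carrier_mat k k"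
    and GGi: "Bk * transpose_mat Bk * Gi = 1\<^sub>m k" and GiG: "Gi * (Bk * transpose_mat Bk) = 1\<^sub>m k"
    and T: "T \<in> carrier_mat n n" and Ts: "transpose_mat T = T"
    and D: "D \<in> carrier_mat k k" and Ds: "transpose_mat D = D"
    and TB: "T * transpose_mat Bk = transpose_mat Bk * D"
  shows "T * (transpose_mat Bk * Gi * Bk) = (transpose_mat Bk * Gi * Bk) * T"
proof -
  let ?Bt = "transpose_mat Bk"
  let ?G = "Bk * transpose_mat Bk"
  have Btc: "?Bt \<in> carrier_mat n k" using Bk by simp
  have d: "dim_row Bk = k" "dim_col Bk = n" "dim_row Gi = k" "dim_col Gi = k" "dim_row T = n" "dim_col T = n"
     "dim_row D = k" "dim_col D = k" using Bk Gi T D by auto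
  have BT: "Bk * T = D * Bk"
  proof -
    have "transpose_mat (T * ?Bt) = transpose_mat (?Bt * D)" using TB by simp
    moreover have "transpose_mat (T * ?Bt) = Bk * T" using T Btc Ts by (simp add: transpose_mult)
    moreover have "transpose_mat (?Bt * D) = D * Bk" using D Btc Ds by (simp add: transpose_mult)
    ultimately show ?thesis by simp
  qed
  have DG: "D * ?G = ?G * D"
  proof -
    have "D * ?G = (D * Bk) * ?Bt" using d by (simp add: assoc_dim del: assoc_mult_mat)
    also have "\<dots> = (Bk * T) * ?Bt" using BT by simp
    also have "\<dots> = Bk * (T * ?Bt)" using d by (simp add: assoc_dim del: assoc_mult_mat)
    also have "\<dots> = Bk * (?Bt * D)" using TB by simp
    also have "\<dots> = ?G * D" using d by (simp add: assoc_dim del: assoc_mult_mat)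
    finally show ?thesis .
  qed
  have GiD: "Gi * D = D * Gi"
  proof -
    have "Gi * D = Gi * D * (?G * Gi)" using GGi d by (simp add: assoc_dim del: assoc_mult_mat)
    also have "\<dots> = Gi * (D * ?G) * Gi" using d by (simp add: assoc_dim del: assoc_mult_mat)
    also have "\<dots> = Gi * (?G * D) * Gi" using DG by simp
    also have "\<dots> = (Gi * ?G) * D * Gi" using d by (simp add: assoc_dim del: assoc_mult_mat)
    also have "\<dots> = D * Gi" using GiG d by simp
    finally show ?thesis .
  qed
  have "T * (?Bt * Gi * Bk) = (T * ?Bt) * Gi * Bk" using d by (simp add: assoc_dim del: assoc_mult_mat)
  also have "\<dots> = (?Bt * D) * Gi * Bk" using TB by simp
  also have "\<dots> = ?Bt * (D * Gi) * Bk" using d by (simp add: assoc_dim del: assoc_mult_mat)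
  also have "\<dots> = ?Bt * (Gi * D) * Bk" using GiD by simp
  also have "\<dots> = ?Bt * Gi * (D * Bk)" using d by (simp add: assoc_dim del: assoc_mult_mat)
  also have "\<dots> = ?Bt * Gi * (Bk * T)" using BT by simp
  also have "\<dots> = (?Bt * Gi * Bk) * T" using d by (simp add: assoc_dim del: assoc_mult_mat)
  finally show ?thesis .
qed

lemma inv_sym:
  fixes G Gi :: "real mat"
  assumes G: "G \<in> carrier_mat k k" and Gi: "Gi \<in> carrier_mat k k" and Gs: "transpose_mat G = G"
    and GGi: "G * Gi = 1\<^sub>m k" and GiG: "Gi * G = 1\<^sub>m k"
  shows "transpose_mat Gi = Gi"
proof -
  have "transpose_mat Gi * G = 1\<^sub>m k"
    using arg_cong[OF GGi, of transpose_mat] G Gi Gs by (simp add: transpose_mult)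
  then have "transpose_mat Gi = transpose_mat Gi * (G * Gi)" using GGi Gi by simp
  also have "\<dots> = (transpose_mat Gi * G) * Gi" using G Gi by simp
  also have "\<dots> = Gi" using \<open>transpose_mat Gi * G = 1\<^sub>m k\<close> Gi by simp
  finally show ?thesis .
qed

lemma diag_of_carrier[simp]: "diag_of n d \<in> carrier_mat n n"
  by (simp add: diag_of_def)

lemma diag_of_transpose[simp]: "transpose_mat (diag_of n d) = diag_of n d"
  by (intro eq_matI) (auto simp: diag_of_def)

lemma diag_mult_left:
  assumes A: "A \<in> carrier_mat n m" and i: "i < n" and j: "j < m"
  shows "(diag_of n d * A) $$ (i, j) = d i * A $$ (i, j)"
proof -
  have "(diag_of n d * A) $$ (i, j) = (\<Sum>a<n. (if i = a then d i else 0) * A $$ (a, j))"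
    using A i j by (simp add: diag_of_def scalar_prod_def lessThan_atLeast0)
  also have "\<dots> = (\<Sum>a<n. if a = i then d i * A $$ (a, j) else 0)" by (intro sum.cong) auto
  also have "\<dots> = d i * A $$ (i, j)" using i by simp
  finally show ?thesis .
qed

lemma diag_mult_right:
  assumes A: "A \<in> carrier_mat m n" and i: "i < m" and j: "j < n"
  shows "(A * diag_of n d) $$ (i, j) = A $$ (i, j) * d j"
proof -
  have "(A * diag_of n d) $$ (i, j) = (\<Sum>a<n. A $$ (i, a) * (if a = j then d a else 0))"
    using A i j by (simp add: diag_of_def scalar_prod_def lessThan_atLeast0)
  also have "\<dots> = (\<Sum>a<n. if a = j then A $$ (i, a) * d j else 0)" by (intro sum.cong) auto
  also have "\<dots> = A $$ (i, j) * d j" using j by simp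
  finally show ?thesis .
qed

lemma projD_min_prop:
  assumes r: "\<rho> \<ge> 0" and u: "u \<in> carrier_vec n" and us: "nonincreasing_vec u"
  shows "\<forall>z\<in>Dcone n. sqnorm (minz n \<rho> u - (u - \<rho> \<cdot>\<^sub>v wvec n)) \<le> sqnorm (z - (u - \<rho> \<cdot>\<^sub>v wvec n))"
proof
  let ?z = "minz n \<rho> u" and ?v = "u - \<rho> \<cdot>\<^sub>v wvec n"
  define C where "C = \<rho> * (\<Sum>i<n. wvec n $ i * u $ i) - \<rho>^2 * (\<Sum>i<n. (wvec n $ i)^2) / 2"
  note zm = minz(2)[OF r u]
  have zD: "?z \<in> Dcone n" by (rule minz_in_D[OF r u us])
  have eq: "\<And>x. x \<in> Dcone n \<Longrightarrow> slope_obj n \<rho> u x = sqnorm (x - ?v) / 2 + C"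
    unfolding C_def by (rule slope_on_D[OF _ u])
  fix z assume z: "z \<in> Dcone n"
  have "slope_obj n \<rho> u ?z \<le> slope_obj n \<rho> u z" using zm Dcone_carrier[OF z] by blast
  then show "sqnorm (?z - ?v) \<le> sqnorm (z - ?v)" using eq[OF zD] eq[OF z] by simp
qed

lemma Brows_index: assumes K: "K \<subseteq> {..<n-1}" and b: "b < card K" and j: "j < n"
  shows "Brows n K $$ (b, j) = Bmat n $$ (pick K b, j)"
  unfolding Brows_def using b j card_K[OF K]
  by (subst submatrix_index) (auto simp: Bmat_def pick_lessThan)

lemma sym_conj:
  fixes P W :: "real mat"
  assumes P: "P \<in> carrier_mat n n" and W: "W \<in> carrier_mat n n" and Ws: "transpose_mat W = W"
  shows "transpose_mat (transpose_mat P * W * P) = transpose_mat P * W * P"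
proof -
  have "transpose_mat (transpose_mat P * W * P) = transpose_mat P * transpose_mat (transpose_mat P * W)"
    using P W by (simp add: transpose_mult[of _ n n _ n])
  also have "transpose_mat (transpose_mat P * W) = W * P"
    using P W Ws by (simp add: transpose_mult[of _ n n _ n])
  finally show ?thesis using P W by simp
qed

lemma comm_sym:
  fixes T Pi :: "real mat"
  assumes T: "T \<in> carrier_mat n n" and Pi: "Pi \<in> carrier_mat n n"
    and c: "T * Pi = Pi * T" and Ts: "transpose_mat T = T" and Ps: "transpose_mat Pi = Pi"
  shows "transpose_mat (T * (1\<^sub>m n - Pi)) = T * (1\<^sub>m n - Pi)"
proof -
  have mc: "1\<^sub>m n - Pi \<in> carrier_mat n n" using Pi by (rule minus_carrier_mat)
  have "transpose_mat (T * (1\<^sub>m n - Pi)) = transpose_mat (1\<^sub>m n - Pi) * T"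
    using Ts by (simp add: transpose_mult[OF T mc])
  also have "transpose_mat (1\<^sub>m n - Pi) = 1\<^sub>m n - Pi"
    using transpose_minus[OF one_carrier_mat Pi] Ps by simp
  also have "(1\<^sub>m n - Pi) * T = T - Pi * T" using minus_mult_distrib_mat[OF one_carrier_mat Pi T] T by simp
  also have "\<dots> = T - T * Pi" using c by simp
  also have "\<dots> = T * (1\<^sub>m n - Pi)" using mult_minus_distrib_mat[OF T one_carrier_mat Pi] T by simp
  finally show ?thesis .
qed

theorem mainTheorem8:
  fixes n :: nat and \<beta> \<rho> :: real and y :: "real vec" and P :: "real mat"
  assumes "\<beta> > 0" and "\<rho> > 0"
    and "y \<in> carrier_vec n"
    and "is_perm_mat n P" and "nonincreasing_vec (P *\<^sub>v y)"
  shows "(let \<Sigma> = diag_of (n - 1) (\<lambda>i. if i \<in> ID n (P *\<^sub>v y - \<rho> \<cdot>\<^sub>v wvec n) then 1 else 0);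
              \<Theta> = diag_of n (\<lambda>i. if \<bar>S_prox n \<rho> y $ i\<bar> \<le> \<beta> then 0 else 1);
              B = Bmat n
          in \<Theta> * transpose_mat P *
               (1\<^sub>m n - transpose_mat B * pinv (\<Sigma> * B * transpose_mat B * \<Sigma>) * B) * P)
         \<in> Mset n \<beta> \<rho> P y"
proof -
  obtain \<pi> where p: "\<pi> permutes {..<n}" and Pdef: "P = perm_mat n \<pi>"
    using assms(4) unfolding is_perm_mat_def by blast
  have r0: "\<rho> \<ge> 0" using assms(2) by simp
  have yc: "y \<in> carrier_vec n" by (rule assms(3))
  have Pc: "P \<in> carrier_mat n n" using Pdef by simp
  define u where "u = P *\<^sub>v y"
  have uc: "u \<in> carrier_vec n" using Pc yc by (simp add: u_def)
  have ue: "u = vec n (\<lambda>i. y $ (\<pi> i))"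
    using perm_mult_vec[OF p yc] uc by (intro eq_vecI) (auto simp: u_def Pdef perm_mat_def)
  have us: "nonincreasing_vec u" using assms(5) by (simp add: u_def)
  define v where "v = P *\<^sub>v y - \<rho> \<cdot>\<^sub>v wvec n"
  have vu: "v = u - \<rho> \<cdot>\<^sub>v wvec n" by (simp add: v_def u_def)
  have vc: "v \<in> carrier_vec n" using uc by (simp add: vu wvec_def)
  define x where "x = minz n \<rho> u"
  have px: "projD n v = x" unfolding vu x_def by (rule projD_minz[OF r0 uc us])
  have xD: "x \<in> Dcone n" unfolding x_def by (rule minz_in_D[OF r0 uc us])
  have xc: "x \<in> carrier_vec n" using xD by (rule Dcone_carrier)
  have xmin: "\<forall>z\<in>Dcone n. sqnorm (x - v) \<le> sqnorm (z - v)"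
    using projD_min_prop[OF r0 uc us] unfolding x_def vu .
  define K where "K = ID n v"
  have Kx: "\<And>i. i \<in> K \<longleftrightarrow> i < n-1 \<and> x$i = x$(i+1)"
    unfolding K_def ID_def px using Bmat_mult[OF xc] by auto
  have Ksub: "K \<subseteq> {..<n-1}" using Kx by auto
  have S: "S_prox n \<rho> y = vec n (\<lambda>i. x $ (inv_into UNIV \<pi> i))"
    unfolding x_def by (rule S_prox_formula[OF r0 yc p ue])
  define \<theta> where "\<theta> = (\<lambda>i. if \<bar>S_prox n \<rho> y $ i\<bar> \<le> \<beta> then 0 else (1::real))"
  define lam where "lam = vec (n-1) (\<lambda>k. \<Sum>i\<le>k. v$i - x$i)"
  note kk = kkt[OF xD vc xmin, folded lam_def]
  have lc: "lam \<in> carrier_vec (n-1)" by (simp add: lam_def)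
  have Bx: "\<And>i. i < n-1 \<Longrightarrow> (Bmat n *\<^sub>v x) $ i = x$i - x$(i+1)" by (rule Bmat_mult[OF xc])
  have lamMD: "lam \<in> MD n v"
    unfolding MD_def px
  proof (intro CollectI conjI allI impI)
    show "lam \<in> carrier_vec (n-1)" by (rule lc)
    show "x - v + transpose_mat (Bmat n) *\<^sub>v lam = 0\<^sub>v n" by (rule kk(1))
    fix i assume i: "i < n-1"
    show "0 \<le> (Bmat n *\<^sub>v x) $ i" using Bx[OF i] xD i by (auto simp: Dcone_def)
  next
    fix i assume i: "i < n-1"
    show "lam $ i \<le> 0" using kk(2) i by auto
  next
    have "lam \<bullet> (Bmat n *\<^sub>v x) = (\<Sum>i\<in>{0..<n-1}. lam $ i * (Bmat n *\<^sub>v x) $ i)"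
      by (simp add: scalar_prod_def Bmat_def)
    also have "\<dots> = 0"
    proof (intro sum.neutral ballI)
      fix i assume "i \<in> {0..<n-1}"
      then have i: "i < n-1" by simp
      show "lam $ i * (Bmat n *\<^sub>v x) $ i = 0" using kk(3) i Bx[OF i] by auto
    qed
    finally show "lam \<bullet> (Bmat n *\<^sub>v x) = 0" .
  qed
  have KKD: "K \<in> KD n v"
    unfolding KD_def
  proof (intro CollectI bexI[OF _ lamMD] conjI)
    show "{i. i < n - 1 \<and> lam $ i \<noteq> 0} \<subseteq> K" using kk(3) Kx by auto
    show "K \<subseteq> ID n v" by (simp add: K_def)
    show "full_row_rank (Brows n K)" by (rule Brows_full[OF Ksub])
  qed
  define Bk where "Bk = Brows n K"
  define Gi where "Gi = mat_inv (Bk * transpose_mat Bk)"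
  define Pi where "Pi = transpose_mat Bk * Gi * Bk"
  have Q0in: "1\<^sub>m n - Pi \<in> QD n v"
    unfolding QD_def Pi_def Gi_def Bk_def using KKD by blast
  have Qin: "transpose_mat P * (1\<^sub>m n - Pi) * P \<in> QS n \<rho> P y"
    unfolding QS_def v_def[symmetric] using Q0in by blast
  have LA: "transpose_mat (Bmat n) * pinv (diag_of (n - 1) (\<lambda>i. if i \<in> ID n (P *\<^sub>v y - \<rho> \<cdot>\<^sub>v wvec n) then 1 else 0) * Bmat n * transpose_mat (Bmat n) * diag_of (n - 1) (\<lambda>i. if i \<in> ID n (P *\<^sub>v y - \<rho> \<cdot>\<^sub>v wvec n) then 1 else 0)) * Bmat n = Pi"
    using LA_main[OF Ksub] unfolding Pi_def Gi_def Bk_def K_def v_def .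
  have M: "(let \<Sigma> = diag_of (n - 1) (\<lambda>i. if i \<in> ID n (P *\<^sub>v y - \<rho> \<cdot>\<^sub>v wvec n) then 1 else 0);
              \<Theta> = diag_of n (\<lambda>i. if \<bar>S_prox n \<rho> y $ i\<bar> \<le> \<beta> then 0 else 1);
              B = Bmat n
          in \<Theta> * transpose_mat P *
               (1\<^sub>m n - transpose_mat B * pinv (\<Sigma> * B * transpose_mat B * \<Sigma>) * B) * P)
        = diag_of n \<theta> * transpose_mat P * (1\<^sub>m n - Pi) * P"
    unfolding Let_def LA \<theta>_def by simp
  let ?k = "card K"
  have Bkc: "Bk \<in> carrier_mat ?k n" unfolding Bk_def by (rule Brows_carrier[OF Ksub])
  obtain Gi0 where Gi0: "Gi0 \<in> carrier_mat ?k ?k" "Bk * transpose_mat Bk * Gi0 = 1\<^sub>m ?k"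
      "Gi0 * (Bk * transpose_mat Bk) = 1\<^sub>m ?k"
    using G_inv[OF Ksub] unfolding Bk_def by blast
  have Gc: "Bk * transpose_mat Bk \<in> carrier_mat ?k ?k" using Bkc by simp
  have GiE: "Gi = Gi0" unfolding Gi_def by (rule mat_inv_eq[OF Gc Gi0(1) Gi0(2) Gi0(3)])
  have Gic: "Gi \<in> carrier_mat ?k ?k" using Gi0 GiE by simp
  have Gs: "transpose_mat (Bk * transpose_mat Bk) = Bk * transpose_mat Bk"
    using Bkc by (simp add: transpose_mult[of _ ?k n _ ?k])
  have Gis: "transpose_mat Gi = Gi" unfolding GiE by (rule inv_sym[OF Gc Gi0(1) Gs Gi0(2) Gi0(3)])
  have Pic: "Pi \<in> carrier_mat n n" using Bkc Gic by (simp add: Pi_def)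
  have Pis: "transpose_mat Pi = Pi"
  proof -
    have c1: "transpose_mat Bk * Gi \<in> carrier_mat n ?k" using Bkc Gic by simp
    have Btc: "transpose_mat Bk \<in> carrier_mat n ?k" using Bkc by simp
    have "transpose_mat Pi = transpose_mat Bk * transpose_mat (transpose_mat Bk * Gi)"
      unfolding Pi_def by (rule transpose_mult[OF c1 Bkc])
    also have "transpose_mat (transpose_mat Bk * Gi) = transpose_mat Gi * Bk"
      using transpose_mult[OF Btc Gic] by simp
    finally show ?thesis unfolding Pi_def Gis using Bkc Gic by simp
  qed
  have pin: "\<And>i. i < n \<Longrightarrow> \<pi> i < n" using p by (meson lessThan_iff permutes_in_image)
  define \<theta>' where "\<theta>' = (\<lambda>a. \<theta> (\<pi> a))"
  define T where "T = diag_of n \<theta>'"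
  have Tc: "T \<in> carrier_mat n n" by (simp add: T_def)
  have Ts: "transpose_mat T = T" by (simp add: T_def)
  have thp: "\<And>a. a < n \<Longrightarrow> \<theta>' a = (if \<bar>x $ a\<bar> \<le> \<beta> then 0 else 1)"
  proof -
    fix a assume a: "a < n"
    have "S_prox n \<rho> y $ (\<pi> a) = x $ (inv_into UNIV \<pi> (\<pi> a))" using S pin[OF a] by simp
    also have "inv_into UNIV \<pi> (\<pi> a) = a" by (rule permutes_inverses(2)[OF p])
    finally show "\<theta>' a = (if \<bar>x $ a\<bar> \<le> \<beta> then 0 else 1)" by (simp add: \<theta>'_def \<theta>_def)
  qed
  have thK: "\<And>a. a \<in> K \<Longrightarrow> \<theta>' (a+1) = \<theta>' a"
  proof -
    fix a assume a: "a \<in> K"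
    then have "a < n-1" "x$a = x$(a+1)" using Kx by auto
    then show "\<theta>' (a+1) = \<theta>' a" using thp[of a] thp[of "a+1"] by auto
  qed
  have PT: "P * diag_of n \<theta> = T * P"
  proof (rule eq_matI)
    fix i j assume i: "i < dim_row (T * P)" and j: "j < dim_col (T * P)"
    then have i': "i < n" and j': "j < n" using Pc Tc by auto
    have "(P * diag_of n \<theta>) $$ (i, j) = P $$ (i, j) * \<theta> j" by (rule diag_mult_right[OF Pc i' j'])
    also have "\<dots> = \<theta>' i * P $$ (i, j)" using i' j' by (simp add: Pdef perm_mat_def \<theta>'_def)
    also have "\<dots> = (T * P) $$ (i, j)" unfolding T_def by (rule diag_mult_left[OF Pc i' j', symmetric])
    finally show "(P * diag_of n \<theta>) $$ (i, j) = (T * P) $$ (i, j)" .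
  qed (use Pc Tc in \<open>auto simp: diag_of_def\<close>)
  have TPt: "diag_of n \<theta> * transpose_mat P = transpose_mat P * T"
  proof -
    have "transpose_mat (P * diag_of n \<theta>) = transpose_mat (T * P)" using PT by simp
    moreover have "transpose_mat (P * diag_of n \<theta>) = diag_of n \<theta> * transpose_mat P"
      using Pc by (simp add: transpose_mult[of _ n n _ n])
    moreover have "transpose_mat (T * P) = transpose_mat P * T"
      using Pc Tc Ts by (simp add: transpose_mult[of _ n n _ n])
    ultimately show ?thesis by simp
  qed
  define D where "D = diag_of ?k (\<lambda>b. \<theta>' (pick K b))"
  have Dc: "D \<in> carrier_mat ?k ?k" by (simp add: D_def)
  have Ds: "transpose_mat D = D" by (simp add: D_def)
  have TB: "T * transpose_mat Bk = transpose_mat Bk * D"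
  proof (rule eq_matI)
    fix j b assume j: "j < dim_row (transpose_mat Bk * D)" and b: "b < dim_col (transpose_mat Bk * D)"
    then have j': "j < n" and b': "b < ?k" using Bkc Dc by auto
    have Btc: "transpose_mat Bk \<in> carrier_mat n ?k" using Bkc by simp
    define q where "q = pick K b"
    have qK: "q \<in> K" and qn: "q < n-1" using pick_K[OF Ksub b'] by (auto simp: q_def)
    have bk: "Bk $$ (b, j) = Bmat n $$ (q, j)" unfolding Bk_def q_def by (rule Brows_index[OF Ksub b' j'])
    have "(T * transpose_mat Bk) $$ (j, b) = \<theta>' j * Bk $$ (b, j)"
      unfolding T_def using diag_mult_left[OF Btc j' b'] Bkc j' b' by simp
    also have "\<dots> = Bk $$ (b, j) * \<theta>' q"
      using thK[OF qK] qn j' unfolding bk by (auto simp: Bmat_index)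
    also have "\<dots> = (transpose_mat Bk * D) $$ (j, b)"
      unfolding D_def q_def using diag_mult_right[OF Btc j' b'] Bkc j' b' by simp
    finally show "(T * transpose_mat Bk) $$ (j, b) = (transpose_mat Bk * D) $$ (j, b)" .
  qed (use Bkc Tc Dc in auto)
  have GGi: "Bk * transpose_mat Bk * Gi = 1\<^sub>m ?k" and GiG: "Gi * (Bk * transpose_mat Bk) = 1\<^sub>m ?k"
    using Gi0 GiE by auto
  have comm: "T * Pi = Pi * T"
    unfolding Pi_def by (rule comm_lemma[OF Bkc Gic GGi GiG Tc Ts Dc Ds TB])
  have Wc: "T * (1\<^sub>m n - Pi) \<in> carrier_mat n n" using Tc Pic by (simp add: minus_carrier_mat)
  have Ws: "transpose_mat (T * (1\<^sub>m n - Pi)) = T * (1\<^sub>m n - Pi)"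
    by (rule comm_sym[OF Tc Pic comm Ts Pis])
  have mc1: "1\<^sub>m n - Pi \<in> carrier_mat n n" using Pic by (rule minus_carrier_mat)
  have Meq: "diag_of n \<theta> * transpose_mat P * (1\<^sub>m n - Pi) * P = transpose_mat P * (T * (1\<^sub>m n - Pi)) * P"
    unfolding TPt using Pc Tc mc1 by simp
  have Msym: "diag_of n \<theta> * transpose_mat P * (1\<^sub>m n - Pi) * P = transpose_mat (diag_of n \<theta> * transpose_mat P * (1\<^sub>m n - Pi) * P)"
    unfolding Meq using sym_conj[OF Pc Wc Ws] by simp
  have Th: "diag_of n \<theta> \<in> dB_prox_l1 n \<beta> (S_prox n \<rho> y)"
    unfolding dB_prox_l1_def \<theta>_def by auto
  have Mprod: "diag_of n \<theta> * transpose_mat P * (1\<^sub>m n - Pi) * P = diag_of n \<theta> * (transpose_mat P * (1\<^sub>m n - Pi) * P)"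
  proof -
    have "dim_row (diag_of n \<theta>) = n" "dim_col (diag_of n \<theta>) = n" by (simp_all add: diag_of_def)
    then show ?thesis using carrier_matD[OF Pc] carrier_matD[OF mc1] by (simp add: assoc_dim del: assoc_mult_mat)
  qed
  show ?thesis unfolding M Mset_def
    using Msym Th Qin Mprod by blast
qed

end
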